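(* Let $\Gamma$ be a countable discrete group with a free presentation $1\to R\to F\xrightarrow{q}\Gamma\to1$, $\bar a=q(a)$, and let $\varphi:H_2(\Gamma,\mathbb{Z})^{Hopf}=\frac{R\cap[F,F]}{[R,F]}\to H_2(\Gamma,\mathbb{Z})$ be the canonical isomorphism. Let $[r]\in H_2(\Gamma,\mathbb{Z})^{Hopf}$ be represented by $r=\prod_{i=1}^g[a_i,b_i]$ with $a_i,b_i\in F$ and $\prod_{i=1}^g[\bar a_i,\bar b_i]=1$, and let $\varphi([r])$ be represented by a bar-resolution $2$-cycle $\varphi(r)=\sum_{j=1}^mk_j[x_j|y_j]$. Then there exist a finite set $S\subset\Gamma$ and $\delta>0$ such that for every $(S,\delta)$-representation $\rho:\Gamma\to U(k)$, $$\frac{1}{2\pi i}\mathrm{Tr}\log\Big(\prod_{i=1}^g[\rho(\bar a_i),\rho(\bar b_i)]\Big)=\frac{1}{2\pi i}\sum_{j=1}^mk_j\mathrm{Tr}\big(\log(\rho(x_j)\rho(y_j)\rho(x_jy_j)^{-1})\big).$$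
   Context: An $(S,\delta)$-representation is a unital map $\rho:\Gamma\to U(k)$ with $\|\rho(st)-\rho(s)\rho(t)\|<\delta$ for all $s,t\in S$. $[x,y]=xyx^{-1}y^{-1}$. $\log$ is the power series centered at $1$. $H_2(\Gamma,\mathbb{Z})$ is computed by the inhomogeneous bar complex with $\partial[a|b]=[a]-[ab]+[b]$ and $\partial[a|b|c]=[b|c]-[ab|c]+[a|bc]-[a|b]$; $\varphi$ is the standard isomorphism between Hopf's description of $H_2$ and bar-resolution homology. *)

theory Defs
  imports "HOL-Algebra.Group" "HOL-Library.Countable_Set" "Jordan_Normal_Form.Matrix"
begin

definition mtrace :: "complex mat \<Rightarrow> complex" where
  "mtrace A = (\<Sum>i<dim_row A. A $$ (i,i))"

definition madj :: "complex mat \<Rightarrow> complex mat" where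
  "madj A = mat (dim_col A) (dim_row A) (\<lambda>(i,j). cnj (A $$ (j,i)))"

definition unitary_mat :: "nat \<Rightarrow> complex mat \<Rightarrow> bool" where
  "unitary_mat k U \<longleftrightarrow> U \<in> carrier_mat k k \<and> madj U * U = 1\<^sub>m k \<and> U * madj U = 1\<^sub>m k"

definition vnorm :: "complex vec \<Rightarrow> real" where
  "vnorm v = sqrt (\<Sum>i<dim_vec v. (cmod (v $ i))\<^sup>2)"

definition opnorm :: "complex mat \<Rightarrow> real" where
  "opnorm A = Sup {vnorm (A *\<^sub>v v) | v. v \<in> carrier_vec (dim_col A) \<and> vnorm v \<le> 1}"

definition mlog :: "complex mat \<Rightarrow> complex mat" where
  "mlog A = mat (dim_row A) (dim_col A)
     (\<lambda>(i,j). \<Sum>n. ((-1) ^ n / of_nat (Suc n)) * (((A - 1\<^sub>m (dim_row A)) ^\<^sub>m (Suc n)) $$ (i,j)))"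

definition mcomm :: "complex mat \<Rightarrow> complex mat \<Rightarrow> complex mat" where
  "mcomm X Y = X * Y * madj X * madj Y"

fun mcomm_prod :: "nat \<Rightarrow> ('g \<Rightarrow> complex mat) \<Rightarrow> (nat \<Rightarrow> 'g) \<Rightarrow> (nat \<Rightarrow> 'g) \<Rightarrow> nat \<Rightarrow> complex mat" where
  "mcomm_prod k \<rho> a b 0 = 1\<^sub>m k"
| "mcomm_prod k \<rho> a b (Suc i) = mcomm_prod k \<rho> a b i * mcomm (\<rho> (a i)) (\<rho> (b i))"

definition gcomm :: "('g,'c) monoid_scheme \<Rightarrow> 'g \<Rightarrow> 'g \<Rightarrow> 'g" where
  "gcomm G x y = x \<otimes>\<^bsub>G\<^esub> y \<otimes>\<^bsub>G\<^esub> inv\<^bsub>G\<^esub> x \<otimes>\<^bsub>G\<^esub> inv\<^bsub>G\<^esub> y"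

fun gcomm_prod :: "('g,'c) monoid_scheme \<Rightarrow> (nat \<Rightarrow> 'g) \<Rightarrow> (nat \<Rightarrow> 'g) \<Rightarrow> nat \<Rightarrow> 'g" where
  "gcomm_prod G a b 0 = \<one>\<^bsub>G\<^esub>"
| "gcomm_prod G a b (Suc i) = gcomm_prod G a b i \<otimes>\<^bsub>G\<^esub> gcomm G (a i) (b i)"

definition Sdelta_rep :: "('g,'c) monoid_scheme \<Rightarrow> 'g set \<Rightarrow> real \<Rightarrow> nat \<Rightarrow> ('g \<Rightarrow> complex mat) \<Rightarrow> bool" where
  "Sdelta_rep G S \<delta> k \<rho> \<longleftrightarrow>
     (\<forall>x\<in>carrier G. unitary_mat k (\<rho> x)) \<and> \<rho> \<one>\<^bsub>G\<^esub> = 1\<^sub>m k \<and>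
     (\<forall>s\<in>S. \<forall>t\<in>S. opnorm (\<rho> (s \<otimes>\<^bsub>G\<^esub> t) - \<rho> s * \<rho> t) < \<delta>)"

text \<open>n-chains are finitely supported functions from n-tuples of group elements to int.\<close>
definition fin_chain :: "'a set \<Rightarrow> ('a \<Rightarrow> int) \<Rightarrow> bool" where
  "fin_chain X f \<longleftrightarrow> finite {p. f p \<noteq> 0} \<and> {p. f p \<noteq> 0} \<subseteq> X"

definition ind :: "bool \<Rightarrow> int" where "ind P = (if P then 1 else 0)"

text \<open>boundary [a|b] = [a] - [ab] + [b]\<close>
definition bd2 :: "('g,'c) monoid_scheme \<Rightarrow> ('g \<times> 'g \<Rightarrow> int) \<Rightarrow> 'g \<Rightarrow> int" where
  "bd2 G f u = (\<Sum>p\<in>{p. f p \<noteq> 0}. f p *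
      (ind (fst p = u) - ind (fst p \<otimes>\<^bsub>G\<^esub> snd p = u) + ind (snd p = u)))"

text \<open>boundary [a|b|c] = [b|c] - [ab|c] + [a|bc] - [a|b]\<close>
definition bd3 :: "('g,'c) monoid_scheme \<Rightarrow> ('g \<times> 'g \<times> 'g \<Rightarrow> int) \<Rightarrow> 'g \<times> 'g \<Rightarrow> int" where
  "bd3 G h q = (\<Sum>t\<in>{t. h t \<noteq> 0}. h t *
      (case t of (a,b,c) \<Rightarrow>
         ind ((b,c) = q) - ind ((a \<otimes>\<^bsub>G\<^esub> b, c) = q) + ind ((a, b \<otimes>\<^bsub>G\<^esub> c) = q) - ind ((a,b) = q)))"

definition is_2cycle :: "('g,'c) monoid_scheme \<Rightarrow> ('g \<times> 'g \<Rightarrow> int) \<Rightarrow> bool" where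
  "is_2cycle G z \<longleftrightarrow> fin_chain (carrier G \<times> carrier G) z \<and> (\<forall>u. bd2 G z u = 0)"

definition homologous2 :: "('g,'c) monoid_scheme \<Rightarrow> ('g \<times> 'g \<Rightarrow> int) \<Rightarrow> ('g \<times> 'g \<Rightarrow> int) \<Rightarrow> bool" where
  "homologous2 G z z' \<longleftrightarrow>
     (\<exists>h. fin_chain (carrier G \<times> carrier G \<times> carrier G) h \<and> (\<forall>q. z q - z' q = bd3 G h q))"

definition formal_sum2 :: "nat \<Rightarrow> (nat \<Rightarrow> int) \<Rightarrow> (nat \<Rightarrow> 'g) \<Rightarrow> (nat \<Rightarrow> 'g) \<Rightarrow> 'g \<times> 'g \<Rightarrow> int" where
  "formal_sum2 m c x y q = (\<Sum>j<m. if (x j, y j) = q then c j else 0)"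

text \<open>Letters of the word a_0 b_0 a_0^-1 b_0^-1 ... a_(g-1) b_(g-1) a_(g-1)^-1 b_(g-1)^-1
  (images in Gamma), and their prefix products.\<close>
definition letter :: "('g,'c) monoid_scheme \<Rightarrow> (nat \<Rightarrow> 'g) \<Rightarrow> (nat \<Rightarrow> 'g) \<Rightarrow> nat \<Rightarrow> 'g" where
  "letter G a b l = (let i = l div 4 in
     if l mod 4 = 0 then a i else if l mod 4 = 1 then b i
     else if l mod 4 = 2 then inv\<^bsub>G\<^esub> (a i) else inv\<^bsub>G\<^esub> (b i))"

fun prefix_prod :: "('g,'c) monoid_scheme \<Rightarrow> (nat \<Rightarrow> 'g) \<Rightarrow> (nat \<Rightarrow> 'g) \<Rightarrow> nat \<Rightarrow> 'g" where
  "prefix_prod G a b 0 = \<one>\<^bsub>G\<^esub>"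
| "prefix_prod G a b (Suc l) = prefix_prod G a b l \<otimes>\<^bsub>G\<^esub> letter G a b l"

text \<open>Bar 2-cycle representing phi([r]) for r = prod_i [a_i,b_i] (with images abar_i, bbar_i):
  sum_{l<4g} [w_0...w_(l-1) | w_l] - sum_i ([abar_i|abar_i^-1] + [bbar_i|bbar_i^-1]) - 2g [1|1].\<close>
definition hopf_cycle :: "('g,'c) monoid_scheme \<Rightarrow> nat \<Rightarrow> (nat \<Rightarrow> 'g) \<Rightarrow> (nat \<Rightarrow> 'g) \<Rightarrow> 'g \<times> 'g \<Rightarrow> int" where
  "hopf_cycle G g a b q =
     (\<Sum>l<4*g. ind ((prefix_prod G a b l, letter G a b l) = q))
     - (\<Sum>i<g. ind ((a i, inv\<^bsub>G\<^esub> (a i)) = q) + ind ((b i, inv\<^bsub>G\<^esub> (b i)) = q))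
     - (if q = (\<one>\<^bsub>G\<^esub>, \<one>\<^bsub>G\<^esub>) then 2 * int g else 0)"

end

theory Submission
  imports Defs "Jordan_Normal_Form.Schur_Decomposition" "HOL-Analysis.Analysis"
begin

lemma vnorm_L2: "vnorm v = L2_set (\<lambda>i. cmod (v $ i)) {..<dim_vec v}"
  unfolding vnorm_def L2_set_def by simp

lemma vnorm_nonneg[simp]: "0 \<le> vnorm v"
  unfolding vnorm_L2 by simp

lemma vnorm_comp: assumes "i < dim_vec v" shows "cmod (v $ i) \<le> vnorm v"
  unfolding vnorm_L2 by (rule member_le_L2_set) (use assms in auto)

lemma vnorm_le_sum: "vnorm v \<le> (\<Sum>i<dim_vec v. cmod (v $ i))"
  unfolding vnorm_L2 by (rule L2_set_le_sum) auto

lemma vnorm_add: assumes "dim_vec u = dim_vec w" shows "vnorm (u + w) \<le> vnorm u + vnorm w"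
proof -
  have "vnorm (u + w) = L2_set (\<lambda>i. cmod (u $ i + w $ i)) {..<dim_vec w}"
    unfolding vnorm_L2 by (intro L2_set_cong) auto
  also have "\<dots> \<le> L2_set (\<lambda>i. cmod (u $ i) + cmod (w $ i)) {..<dim_vec w}"
    by (intro L2_set_mono norm_triangle_ineq) auto
  also have "\<dots> \<le> L2_set (\<lambda>i. cmod (u $ i)) {..<dim_vec w} + L2_set (\<lambda>i. cmod (w $ i)) {..<dim_vec w}"
    by (rule L2_set_triangle_ineq)
  finally show ?thesis unfolding vnorm_L2 using assms by simp
qed

lemma vnorm_smult: "vnorm (c \<cdot>\<^sub>v v) = cmod c * vnorm v"
proof -
  have "vnorm (c \<cdot>\<^sub>v v) = L2_set (\<lambda>i. cmod c * cmod (v $ i)) {..<dim_vec v}"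
    unfolding vnorm_L2 by (intro L2_set_cong) (auto simp: norm_mult)
  also have "\<dots> = cmod c * vnorm v" unfolding vnorm_L2 by (simp add: L2_set_right_distrib)
  finally show ?thesis .
qed

lemma vnorm_uminus: "vnorm (- v) = vnorm v"
  unfolding vnorm_def by simp

lemma vnorm_zero_vec[simp]: "vnorm (0\<^sub>v n) = 0"
  unfolding vnorm_def by simp

lemma vnorm_pos: assumes "v \<noteq> 0\<^sub>v (dim_vec v)" shows "0 < vnorm v"
proof -
  obtain i where i: "i < dim_vec v" "v $ i \<noteq> 0" using assms by (metis eq_vecI index_zero_vec(1) index_zero_vec(2))
  have "0 < cmod (v $ i)" using i by simp
  also have "\<dots> \<le> vnorm v" by (rule vnorm_comp[OF i(1)])
  finally show ?thesis .
qed

lemma vnorm_unit_vec: "j < n \<Longrightarrow> vnorm (unit_vec n j) = 1"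
proof -
  assume j: "j < n"
  have "(\<Sum>i<n. (cmod (unit_vec n j $ i))\<^sup>2) = (\<Sum>i<n. if i = j then 1 else 0)"
    using j by (intro sum.cong) (auto simp: unit_vec_def)
  also have "\<dots> = 1" using j by simp
  finally show ?thesis unfolding vnorm_def by simp
qed

section \<open>Operator norm\<close>

lemma mult_vec_entry: assumes "i < dim_row A" "dim_vec v = dim_col A"
  shows "(A *\<^sub>v v) $ i = (\<Sum>j<dim_col A. A $$ (i,j) * v $ j)"
  using assms by (simp add: scalar_prod_def atLeast0LessThan)

lemma opnorm_bound_aux: assumes "v \<in> carrier_vec (dim_col A)" "vnorm v \<le> 1"
  shows "vnorm (A *\<^sub>v v) \<le> (\<Sum>i<dim_row A. \<Sum>j<dim_col A. cmod (A $$ (i,j)))"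
proof -
  have "vnorm (A *\<^sub>v v) \<le> (\<Sum>i<dim_row A. cmod ((A *\<^sub>v v) $ i))"
    using vnorm_le_sum[of "A *\<^sub>v v"] by simp
  also have "\<dots> \<le> (\<Sum>i<dim_row A. \<Sum>j<dim_col A. cmod (A $$ (i,j)))"
  proof (intro sum_mono)
    fix i assume i: "i \<in> {..<dim_row A}"
    have "cmod ((A *\<^sub>v v) $ i) = cmod (\<Sum>j<dim_col A. A $$ (i,j) * v $ j)"
      using i assms by (auto simp: scalar_prod_def atLeast0LessThan)
    also have "\<dots> \<le> (\<Sum>j<dim_col A. cmod (A $$ (i,j) * v $ j))" by (rule norm_sum)
    also have "\<dots> \<le> (\<Sum>j<dim_col A. cmod (A $$ (i,j)))"
    proof (intro sum_mono)
      fix j assume j: "j \<in> {..<dim_col A}"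
      have "cmod (v $ j) \<le> 1" using vnorm_comp[of j v] assms j by auto
      then show "cmod (A $$ (i,j) * v $ j) \<le> cmod (A $$ (i,j))"
        by (simp add: norm_mult mult_left_le)
    qed
    finally show "cmod ((A *\<^sub>v v) $ i) \<le> (\<Sum>j<dim_col A. cmod (A $$ (i,j)))" .
  qed
  finally show ?thesis .
qed

lemma opnorm_set_bdd: "bdd_above {vnorm (A *\<^sub>v v) | v. v \<in> carrier_vec (dim_col A) \<and> vnorm v \<le> 1}"
  unfolding bdd_above_def using opnorm_bound_aux by blast

lemma opnorm_set_ne: "{vnorm (A *\<^sub>v v) | v. v \<in> carrier_vec (dim_col A) \<and> vnorm v \<le> 1} \<noteq> {}"
proof -
  have "vnorm (A *\<^sub>v 0\<^sub>v (dim_col A)) \<in> {vnorm (A *\<^sub>v v) | v. v \<in> carrier_vec (dim_col A) \<and> vnorm v \<le> 1}"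
    by force
  then show ?thesis by blast
qed

lemma opnorm_ge: assumes "v \<in> carrier_vec (dim_col A)" "vnorm v \<le> 1"
  shows "vnorm (A *\<^sub>v v) \<le> opnorm A"
  unfolding opnorm_def by (rule cSup_upper[OF _ opnorm_set_bdd]) (use assms in blast)

lemma opnorm_le: assumes "\<And>v. v \<in> carrier_vec (dim_col A) \<Longrightarrow> vnorm v \<le> 1 \<Longrightarrow> vnorm (A *\<^sub>v v) \<le> c"
  shows "opnorm A \<le> c"
  unfolding opnorm_def by (rule cSup_least[OF opnorm_set_ne]) (use assms in blast)

lemma opnorm_nonneg[simp]: "0 \<le> opnorm A"
  using opnorm_ge[of "0\<^sub>v (dim_col A)" A] vnorm_nonneg[of "A *\<^sub>v 0\<^sub>v (dim_col A)"]
  by (metis order_trans vnorm_zero_vec zero_carrier_vec zero_less_one_class.zero_le_one)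

lemma opnorm_vec: assumes "v \<in> carrier_vec (dim_col A)"
  shows "vnorm (A *\<^sub>v v) \<le> opnorm A * vnorm v"
proof (cases "vnorm v = 0")
  case True
  then have "v = 0\<^sub>v (dim_col A)" using vnorm_pos[of v] assms by force
  then have "A *\<^sub>v v = 0\<^sub>v (dim_row A)" by (intro eq_vecI) (auto simp: scalar_prod_def)
  then show ?thesis by simp
next
  case False
  then have pos: "0 < vnorm v" using vnorm_nonneg[of v] by linarith
  define w where "w = (complex_of_real (1 / vnorm v)) \<cdot>\<^sub>v v"
  have w: "w \<in> carrier_vec (dim_col A)" "vnorm w \<le> 1"
    using assms pos by (auto simp: w_def vnorm_smult norm_divide)
  have "A *\<^sub>v w = (complex_of_real (1 / vnorm v)) \<cdot>\<^sub>v (A *\<^sub>v v)"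
    unfolding w_def by (rule mult_mat_vec[of A "dim_row A" "dim_col A"]) (use assms in auto)
  then have "vnorm (A *\<^sub>v w) = vnorm (A *\<^sub>v v) / vnorm v"
    using pos by (simp add: vnorm_smult norm_divide)
  with opnorm_ge[OF w] have "vnorm (A *\<^sub>v v) / vnorm v \<le> opnorm A" by simp
  then show ?thesis using pos by (simp add: divide_le_eq mult.commute)
qed

lemma opnorm_entry: assumes "i < dim_row A" "j < dim_col A"
  shows "cmod (A $$ (i,j)) \<le> opnorm A"
proof -
  let ?e = "unit_vec (dim_col A) j :: complex Matrix.vec"
  have "(A *\<^sub>v ?e) $ i = A $$ (i,j)"
    using assms by (simp add: scalar_prod_def unit_vec_def if_distrib cong: if_cong)
  then have "cmod (A $$ (i,j)) \<le> vnorm (A *\<^sub>v ?e)"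
    using vnorm_comp[of i "A *\<^sub>v ?e"] assms by simp
  also have "\<dots> \<le> opnorm A" by (rule opnorm_ge) (use assms vnorm_unit_vec in auto)
  finally show ?thesis .
qed

lemma opnorm_mult: assumes "A \<in> carrier_mat n m" "B \<in> carrier_mat m p"
  shows "opnorm (A * B) \<le> opnorm A * opnorm B"
proof (rule opnorm_le)
  fix v assume v: "v \<in> carrier_vec (dim_col (A * B))" "vnorm v \<le> 1"
  then have v': "v \<in> carrier_vec p" using assms by simp
  have "vnorm ((A * B) *\<^sub>v v) = vnorm (A *\<^sub>v (B *\<^sub>v v))" using assms v' by simp
  also have "\<dots> \<le> opnorm A * vnorm (B *\<^sub>v v)" by (rule opnorm_vec) (use assms v' in auto)
  also have "\<dots> \<le> opnorm A * (opnorm B * vnorm v)"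
    by (intro mult_left_mono opnorm_vec) (use assms v' in auto)
  also have "\<dots> \<le> opnorm A * opnorm B"
    using v(2) by (intro mult_left_mono) (simp_all add: mult_left_le)
  finally show "vnorm ((A * B) *\<^sub>v v) \<le> opnorm A * opnorm B" .
qed

lemma opnorm_add: assumes "A \<in> carrier_mat n m" "B \<in> carrier_mat n m"
  shows "opnorm (A + B) \<le> opnorm A + opnorm B"
proof (rule opnorm_le)
  fix v assume v: "v \<in> carrier_vec (dim_col (A + B))" "vnorm v \<le> 1"
  then have v': "v \<in> carrier_vec m" using assms by simp
  have "vnorm ((A + B) *\<^sub>v v) = vnorm (A *\<^sub>v v + B *\<^sub>v v)"
    using assms v' by (simp add: add_mult_distrib_mat_vec)
  also have "\<dots> \<le> vnorm (A *\<^sub>v v) + vnorm (B *\<^sub>v v)" by (rule vnorm_add) (use assms in simp)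
  also have "\<dots> \<le> opnorm A + opnorm B"
    by (intro add_mono opnorm_ge) (use assms v' v in auto)
  finally show "vnorm ((A + B) *\<^sub>v v) \<le> opnorm A + opnorm B" .
qed

lemma opnorm_smult: "opnorm (c \<cdot>\<^sub>m A) \<le> cmod c * opnorm A"
proof (rule opnorm_le)
  fix v assume v: "v \<in> carrier_vec (dim_col (c \<cdot>\<^sub>m A))" "vnorm v \<le> 1"
  have "(c \<cdot>\<^sub>m A) *\<^sub>v v = c \<cdot>\<^sub>v (A *\<^sub>v v)"
    using v by (intro eq_vecI) (auto simp: scalar_prod_def sum_distrib_left ac_simps)
  then have "vnorm ((c \<cdot>\<^sub>m A) *\<^sub>v v) = cmod c * vnorm (A *\<^sub>v v)" by (simp add: vnorm_smult)
  also have "\<dots> \<le> cmod c * opnorm A"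
    by (intro mult_left_mono opnorm_ge) (use v in auto)
  finally show "vnorm ((c \<cdot>\<^sub>m A) *\<^sub>v v) \<le> cmod c * opnorm A" .
qed

lemma opnorm_uminus: "opnorm (- A) \<le> opnorm A"
proof (rule opnorm_le)
  fix v assume v: "v \<in> carrier_vec (dim_col (- A))" "vnorm v \<le> 1"
  have "(- A) *\<^sub>v v = - (A *\<^sub>v v)"
    using v by (intro eq_vecI) (auto simp: scalar_prod_def sum_negf)
  then show "vnorm ((- A) *\<^sub>v v) \<le> opnorm A" using v opnorm_ge[of v A] by (simp add: vnorm_uminus)
qed

lemma opnorm_one: "opnorm (1\<^sub>m k :: complex mat) \<le> 1"
  by (rule opnorm_le) simp

lemma opnorm_pow: assumes "A \<in> carrier_mat k k"
  shows "opnorm (A ^\<^sub>m n) \<le> opnorm A ^ n"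
proof (induction n)
  case 0 then show ?case using opnorm_one by simp
next
  case (Suc n)
  have "opnorm (A ^\<^sub>m Suc n) = opnorm (A ^\<^sub>m n * A)" by simp
  also have "\<dots> \<le> opnorm (A ^\<^sub>m n) * opnorm A" by (rule opnorm_mult) (use assms in auto)
  also have "\<dots> \<le> opnorm A ^ n * opnorm A" by (intro mult_right_mono Suc) auto
  finally show ?case by (simp add: mult.commute)
qed

lemma madj_carrier[simp]: "dim_row (madj A) = dim_col A" "dim_col (madj A) = dim_row A"
  unfolding madj_def by auto

lemma madj_index[simp]: "i < dim_col A \<Longrightarrow> j < dim_row A \<Longrightarrow> madj A $$ (i,j) = cnj (A $$ (j,i))"
  unfolding madj_def by auto

lemma madj_carrier_mat[simp]: "A \<in> carrier_mat n m \<Longrightarrow> madj A \<in> carrier_mat m n"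
  unfolding carrier_mat_def by auto

lemma vnorm_sq_complex: "complex_of_real ((vnorm w)\<^sup>2) = (\<Sum>i<dim_vec w. cnj (w $ i) * w $ i)"
proof -
  have "(vnorm w)\<^sup>2 = (\<Sum>i<dim_vec w. (cmod (w $ i))\<^sup>2)"
    unfolding vnorm_def by (simp add: sum_nonneg)
  moreover have "\<And>z. (complex_of_real (cmod z))\<^sup>2 = cnj z * z"
    by (metis complex_norm_square of_real_power mult.commute)
  ultimately show ?thesis by simp
qed

lemma unitary_vnorm: assumes U: "U \<in> carrier_mat k k" and adj: "madj U * U = 1\<^sub>m k"
  and v: "v \<in> carrier_vec k"
  shows "vnorm (U *\<^sub>v v) = vnorm v"
proof -
  have e: "(\<Sum>i<k. cnj (U $$ (i,j)) * U $$ (i,l)) = (if j = l then 1 else 0)" if "j < k" "l < k" for j l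
  proof -
    have "(madj U * U) $$ (j,l) = (\<Sum>i<k. cnj (U $$ (i,j)) * U $$ (i,l))"
      using U that by (simp add: scalar_prod_def atLeast0LessThan)
    then show ?thesis using adj that by simp
  qed
  let ?w = "U *\<^sub>v v"
  have wi: "?w $ i = (\<Sum>j<k. U $$ (i,j) * v $ j)" if "i < k" for i
    using U v that by (simp add: scalar_prod_def atLeast0LessThan)
  have "(\<Sum>i<dim_vec ?w. cnj (?w $ i) * ?w $ i)
      = (\<Sum>i<k. \<Sum>j<k. \<Sum>l<k. (cnj (v $ j) * v $ l) * (cnj (U $$ (i,j)) * U $$ (i,l)))"
  proof -
    have "(\<Sum>i<dim_vec ?w. cnj (?w $ i) * ?w $ i)
       = (\<Sum>i<k. cnj (\<Sum>j<k. U $$ (i,j) * v $ j) * (\<Sum>l<k. U $$ (i,l) * v $ l))"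
      using U by (auto intro!: sum.cong simp del: index_mult_mat_vec simp add: wi)
    also have "\<dots> = (\<Sum>i<k. \<Sum>j<k. \<Sum>l<k. (cnj (v $ j) * v $ l) * (cnj (U $$ (i,j)) * U $$ (i,l)))"
    proof (intro sum.cong refl)
      fix i
      have "cnj (\<Sum>j<k. U $$ (i,j) * v $ j) * (\<Sum>l<k. U $$ (i,l) * v $ l)
          = (\<Sum>j<k. \<Sum>l<k. cnj (U $$ (i,j) * v $ j) * (U $$ (i,l) * v $ l))"
        by (simp add: cnj_sum sum_product)
      then show "cnj (\<Sum>j<k. U $$ (i,j) * v $ j) * (\<Sum>l<k. U $$ (i,l) * v $ l)
          = (\<Sum>j<k. \<Sum>l<k. (cnj (v $ j) * v $ l) * (cnj (U $$ (i,j)) * U $$ (i,l)))"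
        by (simp add: ac_simps)
    qed
    finally show ?thesis .
  qed
  also have "\<dots> = (\<Sum>j<k. \<Sum>i<k. \<Sum>l<k. (cnj (v $ j) * v $ l) * (cnj (U $$ (i,j)) * U $$ (i,l)))"
    by (rule sum.swap)
  also have "\<dots> = (\<Sum>j<k. \<Sum>l<k. \<Sum>i<k. (cnj (v $ j) * v $ l) * (cnj (U $$ (i,j)) * U $$ (i,l)))"
    by (rule sum.cong[OF refl], rule sum.swap)
  also have "\<dots> = (\<Sum>j<k. \<Sum>l<k. (cnj (v $ j) * v $ l) * (if j = l then 1 else 0))"
    by (intro sum.cong refl) (simp add: sum_distrib_left[symmetric] e)
  also have "\<dots> = (\<Sum>j<k. cnj (v $ j) * v $ j)"
    by (intro sum.cong refl) (simp add: if_distrib cong: if_cong)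
  also have "\<dots> = (\<Sum>i<dim_vec v. cnj (v $ i) * v $ i)" using v by simp
  finally have "complex_of_real ((vnorm ?w)\<^sup>2) = complex_of_real ((vnorm v)\<^sup>2)"
    by (simp only: vnorm_sq_complex)
  then have "(vnorm ?w)\<^sup>2 = (vnorm v)\<^sup>2" using of_real_eq_iff by blast
  then show ?thesis by (simp add: power2_eq_iff_nonneg)
qed

lemma unitary_opnorm: assumes U: "U \<in> carrier_mat k k" and adj: "madj U * U = 1\<^sub>m k"
  shows "opnorm U \<le> 1"
  by (rule opnorm_le) (use unitary_vnorm[OF U adj] U in auto)

definition lc :: "nat \<Rightarrow> complex" where "lc n = (-1) ^ n / of_nat (Suc n)"

lemma norm_lc: "cmod (lc n) \<le> 1"
proof -
  have "cmod (lc n) = 1 / real (Suc n)"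
    unfolding lc_def norm_divide norm_power by (simp only: norm_of_nat norm_minus_cancel norm_one power_one)
  then show ?thesis by simp
qed

lemma mtrace_bound: assumes "A \<in> carrier_mat k k"
  shows "cmod (mtrace A) \<le> real k * opnorm A"
proof -
  have "cmod (mtrace A) \<le> (\<Sum>i<k. cmod (A $$ (i,i)))"
    unfolding mtrace_def using assms by (simp add: norm_sum)
  also have "\<dots> \<le> (\<Sum>i<k. opnorm A)"
    by (intro sum_mono opnorm_entry) (use assms in auto)
  finally show ?thesis by simp
qed

lemma mtrace_comm: assumes "A \<in> carrier_mat n m" "B \<in> carrier_mat m n"
  shows "mtrace (A * B) = mtrace (B * A)"
proof -
  have "mtrace (A * B) = (\<Sum>i<n. \<Sum>j<m. A $$ (i,j) * B $$ (j,i))"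
    unfolding mtrace_def using assms by (auto simp: scalar_prod_def atLeast0LessThan intro!: sum.cong)
  also have "\<dots> = (\<Sum>j<m. \<Sum>i<n. B $$ (j,i) * A $$ (i,j))"
    by (subst sum.swap) (simp add: mult.commute)
  also have "\<dots> = mtrace (B * A)"
    unfolding mtrace_def using assms by (auto simp: scalar_prod_def atLeast0LessThan intro!: sum.cong)
  finally show ?thesis .
qed

lemma mtrace_similar: assumes "similar_mat_wit X Y P Q"
  shows "mtrace X = mtrace Y"
proof -
  define n where "n = dim_row X"
  from similar_mat_witD[OF n_def assms] have
    c: "P * Q = 1\<^sub>m n" "Q * P = 1\<^sub>m n" "X = P * Y * Q"
    "X \<in> carrier_mat n n" "Y \<in> carrier_mat n n" "P \<in> carrier_mat n n" "Q \<in> carrier_mat n n"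
    by auto
  have "mtrace X = mtrace (P * (Y * Q))" using c by (simp add: assoc_mult_mat[of P n n Y n Q n])
  also have "\<dots> = mtrace ((Y * Q) * P)" by (rule mtrace_comm) (use c in auto)
  also have "\<dots> = mtrace Y" using c by (simp add: assoc_mult_mat[of Y n n Q n P n])
  finally show ?thesis .
qed

lemma mlog_series:
  assumes M: "M \<in> carrier_mat k k" and small: "opnorm (M - 1\<^sub>m k) < 1"
  shows "(\<lambda>n. lc n * mtrace ((M - 1\<^sub>m k) ^\<^sub>m Suc n)) sums mtrace (mlog M)"
proof -
  define X where "X = M - 1\<^sub>m k"
  have X: "X \<in> carrier_mat k k" using M unfolding carrier_mat_def X_def by simp
  define r where "r = opnorm X"
  have r: "0 \<le> r" "r < 1" using small by (auto simp: r_def X_def)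
  define f where "f i n = lc n * (X ^\<^sub>m Suc n) $$ (i,i)" for i n
  have bound: "cmod (f i n) \<le> r ^ Suc n" if "i < k" for i n
  proof -
    have "cmod (f i n) \<le> 1 * cmod ((X ^\<^sub>m Suc n) $$ (i,i))"
      unfolding f_def norm_mult by (intro mult_right_mono norm_lc) auto
    also have "\<dots> \<le> opnorm (X ^\<^sub>m Suc n)"
      using that X by (intro order_trans[OF _ opnorm_entry[of i _ i]]) auto
    also have "\<dots> \<le> r ^ Suc n" unfolding r_def by (rule opnorm_pow[OF X])
    finally show ?thesis .
  qed
  have summ: "summable (f i)" if "i < k" for i
  proof (rule summable_comparison_test[where g = "\<lambda>n. r ^ Suc n"])
    show "\<exists>N. \<forall>n\<ge>N. norm (f i n) \<le> r ^ Suc n" using bound[OF that] by blast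
    show "summable (\<lambda>n. r ^ Suc n)" using r by (simp add: summable_geometric)
  qed
  have "(\<lambda>n. \<Sum>i<k. f i n) sums (\<Sum>i<k. suminf (f i))"
    by (rule sums_sum) (use summ summable_sums in blast)
  moreover have "(\<Sum>i<k. f i n) = lc n * mtrace ((M - 1\<^sub>m k) ^\<^sub>m Suc n)" for n
    unfolding f_def mtrace_def X_def using M by (simp add: sum_distrib_left)
  moreover have "(\<Sum>i<k. suminf (f i)) = mtrace (mlog M)"
    unfolding mtrace_def mlog_def f_def X_def lc_def using M by simp
  ultimately show ?thesis by simp
qed

section \<open>Trace of the logarithm via Schur decomposition\<close>

lemma ut_mult: assumes A: "A \<in> carrier_mat k k" and B: "B \<in> carrier_mat k k"
  and uA: "upper_triangular A" and uB: "upper_triangular B"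
  shows "upper_triangular (A * B)" "\<And>i. i < k \<Longrightarrow> (A * B) $$ (i,i) = A $$ (i,i) * B $$ (i,i)"
proof -
  have e: "(A * B) $$ (i,j) = (\<Sum>l<k. A $$ (i,l) * B $$ (l,j))" if "i < k" "j < k" for i j
    using A B that by (simp add: scalar_prod_def atLeast0LessThan)
  show "upper_triangular (A * B)"
  proof (rule upper_triangularI)
    fix i j assume ij: "j < i" "i < dim_row (A * B)"
    then have "i < k" "j < k" using A by auto
    moreover have "A $$ (i,l) * B $$ (l,j) = 0" if "l < k" for l
    proof (cases "l < i")
      case True then show ?thesis using uA A \<open>i < k\<close> by (auto simp: upper_triangular_def)
    next
      case False then show ?thesis using uB B ij that by (auto simp: upper_triangular_def)
    qed
    ultimately show "(A * B) $$ (i,j) = 0" by (simp add: e)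
  qed
  fix i assume i: "i < k"
  have "(\<Sum>l<k. A $$ (i,l) * B $$ (l,i)) = (\<Sum>l\<in>{i}. A $$ (i,l) * B $$ (l,i))"
  proof (rule sum.mono_neutral_right)
    show "\<forall>l\<in>{..<k} - {i}. A $$ (i,l) * B $$ (l,i) = 0"
    proof
      fix l assume l: "l \<in> {..<k} - {i}"
      show "A $$ (i,l) * B $$ (l,i) = 0"
      proof (cases "l < i")
        case True then show ?thesis using uA A i by (auto simp: upper_triangular_def)
      next
        case False then have "i < l" using l by auto
        then show ?thesis using uB B l by (auto simp: upper_triangular_def)
      qed
    qed
  qed (use i in auto)
  then show "(A * B) $$ (i,i) = A $$ (i,i) * B $$ (i,i)" using e[OF i i] by simp
qed

lemma ut_pow: assumes A: "A \<in> carrier_mat k k" and uA: "upper_triangular A"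
  shows "upper_triangular (A ^\<^sub>m n) \<and> (\<forall>i<k. (A ^\<^sub>m n) $$ (i,i) = (A $$ (i,i)) ^ n)"
proof (induction n)
  case 0 then show ?case using A by simp
next
  case (Suc n)
  have c: "A ^\<^sub>m n \<in> carrier_mat k k" using A by simp
  show ?case using ut_mult[OF c A _ uA] Suc by (simp add: power_commutes)
qed

lemma eigen_small: assumes M: "M \<in> carrier_mat k k" and ev: "eigenvalue M lam"
  shows "cmod (lam - 1) \<le> opnorm (M - 1\<^sub>m k)"
proof -
  obtain v where v: "v \<in> carrier_vec k" "v \<noteq> 0\<^sub>v k" "M *\<^sub>v v = lam \<cdot>\<^sub>v v"
    using ev M unfolding eigenvalue_def eigenvector_def by auto
  have "(M - 1\<^sub>m k) *\<^sub>v v = M *\<^sub>v v - 1\<^sub>m k *\<^sub>v v"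
    using M v by (simp add: minus_mult_distrib_mat_vec)
  also have "\<dots> = (lam - 1) \<cdot>\<^sub>v v" using v by (intro eq_vecI) (auto simp: algebra_simps)
  finally have eq: "(M - 1\<^sub>m k) *\<^sub>v v = (lam - 1) \<cdot>\<^sub>v v" .
  have pos: "0 < vnorm v" using vnorm_pos[of v] v by auto
  have "cmod (lam - 1) * vnorm v = vnorm ((M - 1\<^sub>m k) *\<^sub>v v)" by (simp add: eq vnorm_smult)
  also have "\<dots> \<le> opnorm (M - 1\<^sub>m k) * vnorm v" by (rule opnorm_vec) (use v M in auto)
  finally show ?thesis using pos by simp
qed

lemma ln_series_shift: assumes "cmod z < 1"
  shows "(\<lambda>n. lc n * z ^ Suc n) sums Ln (1 + z)"
proof -
  have "(\<lambda>n. (-1)^Suc n / of_nat n * z^n) sums Ln (1 + z)" by (rule Ln_series[OF assms])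
  then have "(\<lambda>n. (-1)^Suc (Suc n) / of_nat (Suc n) * z^(Suc n)) sums Ln (1 + z)"
    by (subst sums_Suc_iff) simp
  then show ?thesis unfolding lc_def by simp
qed

lemma exp_mtrace_mlog:
  assumes M: "M \<in> carrier_mat k k" and small: "opnorm (M - 1\<^sub>m k) < 1"
  shows "exp (mtrace (mlog M)) = Determinant.det M"
proof -
  obtain es where es: "char_poly M = (\<Prod>a\<leftarrow>es. [:- a, 1:])" "length es = k"
    using char_poly_factorized[OF M] by blast
  obtain B P Q where sd: "schur_decomposition M es = (B,P,Q)" by (metis prod_cases3)
  note sch = schur_decomposition[OF M es(1) sd]
  note sim = conjunct1[OF sch]
  note ut = conjunct1[OF conjunct2[OF sch]]
  note dg = conjunct2[OF conjunct2[OF sch]]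
  note c = similar_mat_witD2[OF M sim]
  have Bi: "B $$ (i,i) = es ! i" if "i < k" for i
    using dg that c(5) unfolding diag_mat_def by auto
  have root: "poly (char_poly M) (es ! i) = 0" if "i < k" for i
  proof -
    have "es ! i \<in> set es" using that es(2) by simp
    then show ?thesis unfolding es(1) poly_prod_list prod_list_zero_iff
      by (auto intro!: image_eqI[where x = "es ! i"])
  qed
  have close: "cmod (es ! i - 1) < 1" if "i < k" for i
    using eigen_small[OF M, of "es ! i"] eigenvalue_root_char_poly[OF M] root[OF that] small by auto
  have simX: "similar_mat_wit (M - 1\<^sub>m k) (B - 1\<^sub>m k) P Q"
  proof -
    have "P * (B - 1\<^sub>m k) * Q = (P * B - P) * Q"
      using c by (simp add: mult_minus_distrib_mat[of P k k B k])
    also have "\<dots> = P * B * Q - P * Q"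
      using c by (simp add: minus_mult_distrib_mat[of "P * B" k k P Q k])
    also have "\<dots> = M - 1\<^sub>m k" using c by simp
    finally show ?thesis unfolding similar_mat_wit_def Let_def using c M by auto
  qed
  have trY: "mtrace ((M - 1\<^sub>m k) ^\<^sub>m n) = (\<Sum>i<k. (es ! i - 1) ^ n)" for n
  proof -
    have "mtrace ((M - 1\<^sub>m k) ^\<^sub>m n) = mtrace ((B - 1\<^sub>m k) ^\<^sub>m n)"
      by (rule mtrace_similar[OF similar_mat_wit_pow[OF simX]])
    also have "\<dots> = (\<Sum>i<k. ((B - 1\<^sub>m k) ^\<^sub>m n) $$ (i,i))"
      unfolding mtrace_def using c by simp
    also have "\<dots> = (\<Sum>i<k. (es ! i - 1) ^ n)"
    proof (intro sum.cong refl)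
      fix i assume i: "i \<in> {..<k}"
      have cY: "B - 1\<^sub>m k \<in> carrier_mat k k" using c unfolding carrier_mat_def by simp
      have uY: "upper_triangular (B - 1\<^sub>m k)"
        using ut c unfolding upper_triangular_def by auto
      show "((B - 1\<^sub>m k) ^\<^sub>m n) $$ (i,i) = (es ! i - 1) ^ n"
        using ut_pow[OF cY uY, of n] i c Bi[of i] by auto
    qed
    finally show ?thesis .
  qed
  have "(\<lambda>n. \<Sum>i<k. lc n * (es ! i - 1) ^ Suc n) sums (\<Sum>i<k. Ln (1 + (es ! i - 1)))"
    by (intro sums_sum ln_series_shift close) auto
  moreover have "(\<lambda>n. \<Sum>i<k. lc n * (es ! i - 1) ^ Suc n) = (\<lambda>n. lc n * mtrace ((M - 1\<^sub>m k) ^\<^sub>m Suc n))"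
    by (intro ext) (simp only: trY sum_distrib_left)
  ultimately have "(\<lambda>n. lc n * mtrace ((M - 1\<^sub>m k) ^\<^sub>m Suc n)) sums (\<Sum>i<k. Ln (1 + (es ! i - 1)))"
    by simp
  from sums_unique2[OF mlog_series[OF M small] this]
  have "mtrace (mlog M) = (\<Sum>i<k. Ln (es ! i))" by simp
  then have "exp (mtrace (mlog M)) = (\<Prod>i<k. exp (Ln (es ! i)))" by (simp add: exp_sum)
  also have "\<dots> = (\<Prod>i<k. es ! i)"
  proof (intro prod.cong refl exp_Ln)
    fix i assume "i \<in> {..<k}"
    then show "es ! i \<noteq> 0" using close[of i] by auto
  qed
  also have "\<dots> = prod_list es" using es(2) by (simp add: prod.list_conv_set_nth atLeast0LessThan)
  also have "\<dots> = Determinant.det B" using Determinant.det_upper_triangular[OF ut c(5)] dg by simp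
  also have "\<dots> = Determinant.det M"
  proof -
    have PB: "P * B \<in> carrier_mat k k" using c by simp
    have "Determinant.det M = Determinant.det (P * B) * Determinant.det Q"
      using c Determinant.det_mult[OF PB c(7)] by simp
    also have "\<dots> = Determinant.det B * (Determinant.det P * Determinant.det Q)"
      using Determinant.det_mult[OF c(6) c(5)] by simp
    also have "Determinant.det P * Determinant.det Q = 1"
      using c(1) Determinant.det_mult[OF c(6) c(7)] by simp
    finally show ?thesis by simp
  qed
  finally show ?thesis .
qed


section \<open>Continuity of the trace of the logarithm\<close>

definition cont_mat :: "real set \<Rightarrow> nat \<Rightarrow> (real \<Rightarrow> complex mat) \<Rightarrow> bool" where
  "cont_mat S k A \<longleftrightarrow> (\<forall>t. A t \<in> carrier_mat k k) \<and>
     (\<forall>i<k. \<forall>j<k. continuous_on S (\<lambda>t. A t $$ (i,j)))"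

lemma cont_mat_mult: assumes "cont_mat S k A" "cont_mat S k B"
  shows "cont_mat S k (\<lambda>t. A t * B t)"
proof -
  have c: "A t \<in> carrier_mat k k" "B t \<in> carrier_mat k k" for t using assms by (auto simp: cont_mat_def)
  have e: "(A t * B t) $$ (i,j) = (\<Sum>l<k. A t $$ (i,l) * B t $$ (l,j))" if "i < k" "j < k" for i j t
    using c[of t] that by (simp add: scalar_prod_def atLeast0LessThan)
  show ?thesis unfolding cont_mat_def
  proof (intro conjI allI impI)
    fix t show "A t * B t \<in> carrier_mat k k" using c[of t] by simp
  next
    fix i j assume ij: "i < k" "j < k"
    have "continuous_on S (\<lambda>t. \<Sum>l<k. A t $$ (i,l) * B t $$ (l,j))"
      using assms ij by (intro continuous_intros) (auto simp: cont_mat_def)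
    then show "continuous_on S (\<lambda>t. (A t * B t) $$ (i,j))" using e[OF ij] by simp
  qed
qed

lemma cont_mat_const: "A \<in> carrier_mat k k \<Longrightarrow> cont_mat S k (\<lambda>t. A)"
  unfolding cont_mat_def by auto

lemma cont_mat_pow: assumes "cont_mat S k A" shows "cont_mat S k (\<lambda>t. A t ^\<^sub>m n)"
proof (induction n)
  case 0
  have "dim_row (A t) = k" for t using assms unfolding cont_mat_def by (meson carrier_matD(1))
  then have "(\<lambda>t. A t ^\<^sub>m 0) = (\<lambda>t. 1\<^sub>m k)" by auto
  then show ?case using cont_mat_const[of "1\<^sub>m k" k S] by simp
next
  case (Suc n)
  show ?case using cont_mat_mult[OF Suc assms] by simp
qed

lemma cont_mat_minus: assumes "cont_mat S k A" "B \<in> carrier_mat k k"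
  shows "cont_mat S k (\<lambda>t. A t - B)"
  using assms unfolding cont_mat_def by (auto intro!: continuous_intros)

lemma cont_mat_mtrace: assumes "cont_mat S k A" shows "continuous_on S (\<lambda>t. mtrace (A t))"
proof -
  have "mtrace (A t) = (\<Sum>i<k. A t $$ (i,i))" for t
    using assms unfolding cont_mat_def mtrace_def by auto
  moreover have "continuous_on S (\<lambda>t. \<Sum>i<k. A t $$ (i,i))"
    using assms unfolding cont_mat_def by (auto intro!: continuous_intros)
  ultimately show ?thesis by simp
qed

lemma cont_mat_affine: assumes "X \<in> carrier_mat k k"
  shows "cont_mat S k (\<lambda>t. 1\<^sub>m k + complex_of_real t \<cdot>\<^sub>m X)"
  unfolding cont_mat_def using assms by (auto intro!: continuous_intros)

lemma cont_mlog: assumes A: "cont_mat S k M" and r: "r < 1" "0 \<le> r"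
  and small: "\<And>t. t \<in> S \<Longrightarrow> opnorm (M t - 1\<^sub>m k) \<le> r"
  shows "continuous_on S (\<lambda>t. mtrace (mlog (M t)))"
proof -
  have Mc: "M t \<in> carrier_mat k k" for t using A by (simp add: cont_mat_def)
  have Xc: "M t - 1\<^sub>m k \<in> carrier_mat k k" for t using Mc[of t] unfolding carrier_mat_def by simp
  define f where "f n t = lc n * mtrace ((M t - 1\<^sub>m k) ^\<^sub>m Suc n)" for n t
  have bound: "norm (f n t) \<le> real k * r ^ Suc n" if t: "t \<in> S" for n t
  proof -
    have "norm (f n t) \<le> 1 * cmod (mtrace ((M t - 1\<^sub>m k) ^\<^sub>m Suc n))"
      unfolding f_def norm_mult by (intro mult_right_mono norm_lc) auto
    also have "\<dots> \<le> real k * opnorm ((M t - 1\<^sub>m k) ^\<^sub>m Suc n)"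
      using mtrace_bound[OF pow_carrier_mat[OF Xc], of t "Suc n"] by (simp only: mult_1)
    also have "\<dots> \<le> real k * opnorm (M t - 1\<^sub>m k) ^ Suc n"
      by (intro mult_left_mono opnorm_pow[OF Xc]) auto
    also have "\<dots> \<le> real k * r ^ Suc n"
      by (intro mult_left_mono power_mono small t) auto
    finally show ?thesis .
  qed
  have summ: "summable (\<lambda>n. real k * r ^ Suc n)"
    using r by (intro summable_mult) (simp add: summable_geometric)
  have ul: "uniform_limit S (\<lambda>n t. \<Sum>i<n. f i t) (\<lambda>t. suminf (\<lambda>i. f i t)) sequentially"
    by (rule Weierstrass_m_test[OF bound summ])
  have cf: "continuous_on S (f n)" for n
  proof -
    have "cont_mat S k (\<lambda>t. (M t - 1\<^sub>m k) ^\<^sub>m Suc n)"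
      by (intro cont_mat_pow cont_mat_minus A) simp
    then show ?thesis unfolding f_def by (intro continuous_intros cont_mat_mtrace)
  qed
  have "continuous_on S (\<lambda>t. suminf (\<lambda>i. f i t))"
    by (rule uniform_limit_theorem[OF _ ul]) (auto intro!: always_eventually continuous_intros cf)
  moreover have "mtrace (mlog (M t)) = suminf (\<lambda>i. f i t)" if "t \<in> S" for t
  proof -
    have "opnorm (M t - 1\<^sub>m k) < 1" using small[OF that] r by simp
    from mlog_series[OF Mc this] show ?thesis unfolding f_def by (simp add: sums_iff)
  qed
  ultimately show ?thesis using continuous_on_cong by force
qed

section \<open>Additivity of the trace of the logarithm\<close>

lemma carrier_minus_one[simp]: "(A :: complex mat) \<in> carrier_mat k k \<Longrightarrow> A - 1\<^sub>m k \<in> carrier_mat k k"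
  unfolding carrier_mat_def by simp

lemma prod_minus_one_eq: fixes P Q :: "complex mat" assumes P: "P \<in> carrier_mat k k" and Q: "Q \<in> carrier_mat k k"
  shows "P * Q - 1\<^sub>m k = (P - 1\<^sub>m k) * (Q - 1\<^sub>m k) + (P - 1\<^sub>m k) + (Q - 1\<^sub>m k)"
proof (rule eq_matI)
  fix i j assume ij: "i < dim_row ((P - 1\<^sub>m k) * (Q - 1\<^sub>m k) + (P - 1\<^sub>m k) + (Q - 1\<^sub>m k))"
    "j < dim_col ((P - 1\<^sub>m k) * (Q - 1\<^sub>m k) + (P - 1\<^sub>m k) + (Q - 1\<^sub>m k))"
  then have i: "i < k" and j: "j < k" using P Q by auto
  define d where "d a b = (if a = b then 1 else 0 :: complex)" for a b :: nat
  have s1: "(\<Sum>l<k. P $$ (i,l) * d l j) = P $$ (i,j)"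
  proof -
    have "(\<Sum>l<k. P $$ (i,l) * d l j) = (\<Sum>l<k. if l = j then P $$ (i,l) else 0)"
      by (intro sum.cong) (auto simp: d_def)
    then show ?thesis using j by simp
  qed
  have s2: "(\<Sum>l<k. d i l * Q $$ (l,j)) = Q $$ (i,j)"
  proof -
    have "(\<Sum>l<k. d i l * Q $$ (l,j)) = (\<Sum>l<k. if i = l then Q $$ (l,j) else 0)"
      by (intro sum.cong) (auto simp: d_def)
    then show ?thesis using i by simp
  qed
  have s3: "(\<Sum>l<k. d i l * d l j) = d i j"
  proof -
    have "(\<Sum>l<k. d i l * d l j) = (\<Sum>l<k. if i = l then d l j else 0)"
      by (intro sum.cong) (auto simp: d_def)
    then show ?thesis using i by simp
  qed
  have "(\<Sum>l<k. (P $$ (i,l) - d i l) * (Q $$ (l,j) - d l j))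
      = (\<Sum>l<k. P $$ (i,l) * Q $$ (l,j)) - (\<Sum>l<k. P $$ (i,l) * d l j)
        - (\<Sum>l<k. d i l * Q $$ (l,j)) + (\<Sum>l<k. d i l * d l j)"
    by (simp add: algebra_simps sum.distrib sum_subtractf)
  also have "\<dots> = (\<Sum>l<k. P $$ (i,l) * Q $$ (l,j)) - P $$ (i,j) - Q $$ (i,j) + d i j"
    using s1 s2 s3 by simp
  finally have key: "(\<Sum>l<k. (P $$ (i,l) - d i l) * (Q $$ (l,j) - d l j))
      = (\<Sum>l<k. P $$ (i,l) * Q $$ (l,j)) - P $$ (i,j) - Q $$ (i,j) + d i j" .
  have L: "(P * Q - 1\<^sub>m k) $$ (i,j) = (\<Sum>l<k. P $$ (i,l) * Q $$ (l,j)) - d i j"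
    using P Q i j by (simp add: scalar_prod_def atLeast0LessThan d_def)
  have R: "((P - 1\<^sub>m k) * (Q - 1\<^sub>m k) + (P - 1\<^sub>m k) + (Q - 1\<^sub>m k)) $$ (i,j)
     = (\<Sum>l<k. (P $$ (i,l) - d i l) * (Q $$ (l,j) - d l j)) + (P $$ (i,j) - d i j) + (Q $$ (i,j) - d i j)"
    using P Q i j by (simp add: scalar_prod_def atLeast0LessThan d_def)
  show "(P * Q - 1\<^sub>m k) $$ (i,j) = ((P - 1\<^sub>m k) * (Q - 1\<^sub>m k) + (P - 1\<^sub>m k) + (Q - 1\<^sub>m k)) $$ (i,j)"
    unfolding L R key by simp
qed (use P Q in auto)

lemma opnorm_prod_minus_one: fixes P Q :: "complex mat" assumes P: "P \<in> carrier_mat k k" and Q: "Q \<in> carrier_mat k k"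
  shows "opnorm (P * Q - 1\<^sub>m k) \<le> opnorm (P - 1\<^sub>m k) + opnorm (Q - 1\<^sub>m k) + opnorm (P - 1\<^sub>m k) * opnorm (Q - 1\<^sub>m k)"
proof -
  have c: "P - 1\<^sub>m k \<in> carrier_mat k k" "Q - 1\<^sub>m k \<in> carrier_mat k k" using P Q by auto
  have c2: "(P - 1\<^sub>m k) * (Q - 1\<^sub>m k) \<in> carrier_mat k k" using c by simp
  have c3: "(P - 1\<^sub>m k) * (Q - 1\<^sub>m k) + (P - 1\<^sub>m k) \<in> carrier_mat k k" using c by simp
  have "opnorm (P * Q - 1\<^sub>m k) \<le> opnorm ((P - 1\<^sub>m k) * (Q - 1\<^sub>m k) + (P - 1\<^sub>m k)) + opnorm (Q - 1\<^sub>m k)"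
    unfolding prod_minus_one_eq[OF P Q] by (rule opnorm_add[OF c3 c(2)])
  also have "\<dots> \<le> opnorm ((P - 1\<^sub>m k) * (Q - 1\<^sub>m k)) + opnorm (P - 1\<^sub>m k) + opnorm (Q - 1\<^sub>m k)"
    using opnorm_add[OF c2 c(1)] by simp
  also have "\<dots> \<le> opnorm (P - 1\<^sub>m k) * opnorm (Q - 1\<^sub>m k) + opnorm (P - 1\<^sub>m k) + opnorm (Q - 1\<^sub>m k)"
    using opnorm_mult[OF c] by simp
  finally show ?thesis by simp
qed

lemma opnorm_zero: "opnorm (0\<^sub>m n m :: complex mat) \<le> 0"
proof (rule opnorm_le)
  fix v :: "complex Matrix.vec" assume "v \<in> carrier_vec (dim_col (0\<^sub>m n m :: complex mat))"
  then have "(0\<^sub>m n m :: complex mat) *\<^sub>v v = 0\<^sub>v n" by (intro eq_vecI) (auto simp: scalar_prod_def)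
  then show "vnorm ((0\<^sub>m n m :: complex mat) *\<^sub>v v) \<le> 0" by simp
qed

lemma mlog_one: "mtrace (mlog (1\<^sub>m k)) = 0"
proof -
  have z: "1\<^sub>m k - 1\<^sub>m k = (0\<^sub>m k k :: complex mat)" by (intro eq_matI) auto
  have "opnorm (1\<^sub>m k - 1\<^sub>m k :: complex mat) < 1" unfolding z using opnorm_zero[of k k] by simp
  from mlog_series[OF one_carrier_mat this]
  have "(\<lambda>n. lc n * mtrace ((1\<^sub>m k - 1\<^sub>m k) ^\<^sub>m Suc n)) sums mtrace (mlog (1\<^sub>m k))" .
  moreover have "mtrace ((1\<^sub>m k - 1\<^sub>m k :: complex mat) ^\<^sub>m Suc n) = 0" for n
  proof -
    have "(0\<^sub>m k k :: complex mat) ^\<^sub>m Suc n = 0\<^sub>m k k"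
      using right_mult_zero_mat[OF pow_carrier_mat[OF zero_carrier_mat[of k k]], of n k]
      by (simp only: pow_mat.simps)
    then show ?thesis unfolding z mtrace_def by simp
  qed
  ultimately have "(\<lambda>n. 0) sums mtrace (mlog (1\<^sub>m k :: complex mat))" by simp
  then show ?thesis using sums_zero sums_unique2 by blast
qed

lemma affine_minus_one: assumes X: "X \<in> carrier_mat k k"
  shows "(1\<^sub>m k + complex_of_real t \<cdot>\<^sub>m X) - 1\<^sub>m k = complex_of_real t \<cdot>\<^sub>m X"
  by (rule eq_matI) (use X in auto)

lemma affine_carrier: "X \<in> carrier_mat k k \<Longrightarrow> 1\<^sub>m k + complex_of_real t \<cdot>\<^sub>m X \<in> carrier_mat k k"
  by simp

lemma affine_zero: assumes X: "X \<in> carrier_mat k k"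
  shows "1\<^sub>m k + complex_of_real 0 \<cdot>\<^sub>m X = 1\<^sub>m k"
  by (rule eq_matI) (use X in auto)

lemma affine_one: assumes A: "(A :: complex mat) \<in> carrier_mat k k"
  shows "1\<^sub>m k + complex_of_real 1 \<cdot>\<^sub>m (A - 1\<^sub>m k) = A"
  by (rule eq_matI) (use A in auto)

lemma tau_add:
  assumes A: "A \<in> carrier_mat k k" and B: "B \<in> carrier_mat k k"
    and nA: "opnorm (A - 1\<^sub>m k) \<le> 1/3" and nB: "opnorm (B - 1\<^sub>m k) \<le> 1/3"
  shows "mtrace (mlog (A * B)) = mtrace (mlog A) + mtrace (mlog B)"
proof -
  define X where "X = A - 1\<^sub>m k"
  define Y where "Y = B - 1\<^sub>m k"
  have X: "X \<in> carrier_mat k k" and Y: "Y \<in> carrier_mat k k" using A B by (auto simp: X_def Y_def)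
  define At where "At t = 1\<^sub>m k + complex_of_real t \<cdot>\<^sub>m X" for t
  define Bt where "Bt t = 1\<^sub>m k + complex_of_real t \<cdot>\<^sub>m Y" for t
  have Atc: "At t \<in> carrier_mat k k" and Btc: "Bt t \<in> carrier_mat k k" for t
    using X Y by (auto simp: At_def Bt_def)
  have nAt: "opnorm (At t - 1\<^sub>m k) \<le> 1/3" and nBt: "opnorm (Bt t - 1\<^sub>m k) \<le> 1/3"
    if t: "t \<in> {0..1}" for t
  proof -
    have "opnorm (At t - 1\<^sub>m k) \<le> cmod (complex_of_real t) * opnorm X"
      unfolding At_def affine_minus_one[OF X] by (rule opnorm_smult)
    also have "\<dots> \<le> 1 * (1/3)" using t nA unfolding X_def
      by (intro mult_mono) auto
    finally show "opnorm (At t - 1\<^sub>m k) \<le> 1/3" by simp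
    have "opnorm (Bt t - 1\<^sub>m k) \<le> cmod (complex_of_real t) * opnorm Y"
      unfolding Bt_def affine_minus_one[OF Y] by (rule opnorm_smult)
    also have "\<dots> \<le> 1 * (1/3)" using t nB unfolding Y_def
      by (intro mult_mono) auto
    finally show "opnorm (Bt t - 1\<^sub>m k) \<le> 1/3" by simp
  qed
  have nABt: "opnorm (At t * Bt t - 1\<^sub>m k) \<le> 7/9" if t: "t \<in> {0..1}" for t
  proof -
    have "opnorm (At t * Bt t - 1\<^sub>m k) \<le> opnorm (At t - 1\<^sub>m k) + opnorm (Bt t - 1\<^sub>m k)
        + opnorm (At t - 1\<^sub>m k) * opnorm (Bt t - 1\<^sub>m k)"
      by (rule opnorm_prod_minus_one[OF Atc Btc])
    also have "\<dots> \<le> 1/3 + 1/3 + 1/3 * (1/3)"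
      using nAt[OF t] nBt[OF t] by (intro add_mono mult_mono) auto
    finally show ?thesis by simp
  qed
  define f where "f t = mtrace (mlog (At t * Bt t)) - mtrace (mlog (At t)) - mtrace (mlog (Bt t))" for t
  have cA: "cont_mat {0..1} k At" unfolding At_def by (rule cont_mat_affine[OF X])
  have cB: "cont_mat {0..1} k Bt" unfolding Bt_def by (rule cont_mat_affine[OF Y])
  have contf: "continuous_on {0..1} f"
    unfolding f_def
    by (intro continuous_on_diff cont_mlog[OF cont_mat_mult[OF cA cB], of "7/9"]
        cont_mlog[OF cA, of "1/3"] cont_mlog[OF cB, of "1/3"] nAt nBt nABt) auto
  have expf: "exp (f t) = 1" if t: "t \<in> {0..1}" for t
  proof -
    have ABc: "At t * Bt t \<in> carrier_mat k k" using Atc[of t] Btc[of t] by (rule mult_carrier_mat)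
    have e1: "exp (mtrace (mlog (At t * Bt t))) = Determinant.det (At t * Bt t)"
      by (rule exp_mtrace_mlog[OF ABc]) (use nABt[OF t] in simp)
    have e2: "exp (mtrace (mlog (At t))) = Determinant.det (At t)"
      by (rule exp_mtrace_mlog[OF Atc]) (use nAt[OF t] in simp)
    have e3: "exp (mtrace (mlog (Bt t))) = Determinant.det (Bt t)"
      by (rule exp_mtrace_mlog[OF Btc]) (use nBt[OF t] in simp)
    have d: "Determinant.det (At t * Bt t) = Determinant.det (At t) * Determinant.det (Bt t)"
      by (rule Determinant.det_mult[OF Atc Btc])
    have nz: "Determinant.det (At t) \<noteq> 0" "Determinant.det (Bt t) \<noteq> 0"
      using e2 e3 exp_not_eq_zero by metis+
    show ?thesis unfolding f_def exp_diff e1 e2 e3 d using nz by simp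
  qed
  have "f constant_on {0..1}"
  proof (rule continuous_discrete_range_constant[OF _ contf])
    show "connected {0..1::real}" by simp
    fix x assume x: "x \<in> {0..1::real}"
    show "\<exists>e>0. \<forall>y. y \<in> {0..1} \<and> f y \<noteq> f x \<longrightarrow> e \<le> norm (f y - f x)"
    proof (intro exI[of _ "2 * pi"] conjI allI impI)
      show "0 < 2 * pi" by simp
      fix y assume y: "y \<in> {0..1} \<and> f y \<noteq> f x"
      have "exp (f y) = exp (f x)" using expf x y by simp
      then obtain n :: int where n: "f y = f x + (of_int (2 * n) * pi) * \<i>" using exp_eq by blast
      have "n \<noteq> 0" using n y by auto
      then have "1 \<le> \<bar>real_of_int n\<bar>" by linarith
      have "norm (f y - f x) = norm ((of_int (2 * n) * pi) * \<i>)" using n by simp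
      also have "\<dots> = 2 * pi * \<bar>real_of_int n\<bar>" by (simp add: norm_mult abs_mult)
      finally show "2 * pi \<le> norm (f y - f x)" using \<open>1 \<le> \<bar>real_of_int n\<bar>\<close> by simp
    qed
  qed
  then have "f 1 = f 0" unfolding constant_on_def by force
  moreover have "At 0 = 1\<^sub>m k" "Bt 0 = 1\<^sub>m k" unfolding At_def Bt_def
    using affine_zero[OF X] affine_zero[OF Y] by simp_all
  moreover have "At 1 = A" "Bt 1 = B" unfolding At_def Bt_def X_def Y_def
    using affine_one[OF A] affine_one[OF B] by simp_all
  ultimately show ?thesis unfolding f_def using mlog_one[of k] by (simp add: algebra_simps)
qed

lemma madj_madj[simp]: "madj (madj A) = A"
  by (rule eq_matI) auto

lemma madj_one[simp]: "madj (1\<^sub>m k) = 1\<^sub>m k"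
  by (rule eq_matI) auto

lemma madj_mult: assumes A: "A \<in> carrier_mat n m" and B: "B \<in> carrier_mat m p"
  shows "madj (A * B) = madj B * madj A"
proof (rule eq_matI)
  fix i j assume ij: "i < dim_row (madj B * madj A)" "j < dim_col (madj B * madj A)"
  then have i: "i < p" and j: "j < n" using A B by auto
  have "madj (A * B) $$ (i,j) = cnj (\<Sum>l<m. A $$ (j,l) * B $$ (l,i))"
    using A B i j by (simp add: scalar_prod_def atLeast0LessThan)
  also have "\<dots> = (\<Sum>l<m. cnj (B $$ (l,i)) * cnj (A $$ (j,l)))"
    by (simp add: cnj_sum mult.commute)
  also have "\<dots> = (madj B * madj A) $$ (i,j)"
    using A B i j by (simp add: scalar_prod_def atLeast0LessThan)
  finally show "madj (A * B) $$ (i,j) = (madj B * madj A) $$ (i,j)" .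
qed (use A B in auto)

context fixes k :: nat
begin

lemma assoc_k: "A \<in> carrier_mat k k \<Longrightarrow> B \<in> carrier_mat k k \<Longrightarrow> C \<in> carrier_mat k k
   \<Longrightarrow> (A :: complex mat) * B * C = A * (B * C)"
  by (rule assoc_mult_mat)

lemma mult_k: "A \<in> carrier_mat k k \<Longrightarrow> B \<in> carrier_mat k k \<Longrightarrow> (A :: complex mat) * B \<in> carrier_mat k k"
  by simp

lemma madj_k: "A \<in> carrier_mat k k \<Longrightarrow> madj A \<in> carrier_mat k k"
  by simp

lemma madj_mult_k: "A \<in> carrier_mat k k \<Longrightarrow> B \<in> carrier_mat k k \<Longrightarrow> madj (A * B) = madj B * madj A"
  by (rule madj_mult)

lemma one_left_k: "(A :: complex mat) \<in> carrier_mat k k \<Longrightarrow> 1\<^sub>m k * A = A"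
  by simp
lemma one_right_k: "(A :: complex mat) \<in> carrier_mat k k \<Longrightarrow> A * 1\<^sub>m k = A"
  by simp

lemma unitary_carrier: "unitary_mat k U \<Longrightarrow> U \<in> carrier_mat k k"
  unfolding unitary_mat_def by simp

lemma unitary_l: "unitary_mat k U \<Longrightarrow> madj U * U = 1\<^sub>m k"
  unfolding unitary_mat_def by simp

lemma unitary_r: "unitary_mat k U \<Longrightarrow> U * madj U = 1\<^sub>m k"
  unfolding unitary_mat_def by simp

lemma unitary_l2: "unitary_mat k U \<Longrightarrow> (X :: complex mat) \<in> carrier_mat k k \<Longrightarrow> madj U * (U * X) = X"
  using assoc_k[of "madj U" U X] unitary_l[of U] unitary_carrier[of U] by simp

lemma unitary_r2: "unitary_mat k U \<Longrightarrow> (X :: complex mat) \<in> carrier_mat k k \<Longrightarrow> U * (madj U * X) = X"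
  using assoc_k[of U "madj U" X] unitary_r[of U] unitary_carrier[of U] by simp

lemma unitary_one: "unitary_mat k (1\<^sub>m k)"
  unfolding unitary_mat_def by simp

lemma unitary_madj: "unitary_mat k U \<Longrightarrow> unitary_mat k (madj U)"
  unfolding unitary_mat_def by simp

lemma unitary_mult: assumes "unitary_mat k U" "unitary_mat k V" shows "unitary_mat k (U * V)"
proof -
  have c: "U \<in> carrier_mat k k" "V \<in> carrier_mat k k" using assms unitary_carrier by auto
  have "madj (U * V) * (U * V) = madj V * (madj U * (U * V))"
    using c by (simp add: madj_mult_k assoc_k)
  also have "\<dots> = 1\<^sub>m k" using c assms by (simp add: unitary_l2 unitary_l)
  finally have 1: "madj (U * V) * (U * V) = 1\<^sub>m k" .
  have "(U * V) * madj (U * V) = U * (V * (madj V * madj U))"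
    using c by (simp add: madj_mult_k assoc_k mult_k madj_k)
  also have "\<dots> = 1\<^sub>m k" using c assms by (simp add: unitary_r2 unitary_r)
  finally have 2: "(U * V) * madj (U * V) = 1\<^sub>m k" .
  show ?thesis unfolding unitary_mat_def using 1 2 c by simp
qed

lemma unitary_opnorm_k: "unitary_mat k U \<Longrightarrow> opnorm U \<le> 1"
  using unitary_opnorm[of U k] unfolding unitary_mat_def by simp

lemmas msimps = assoc_k mult_k madj_k madj_mult_k one_left_k one_right_k unitary_carrier
  unitary_l unitary_r unitary_l2 unitary_r2 one_carrier_mat

lemma conj_minus_one: assumes U: "unitary_mat k U" and M: "M \<in> carrier_mat k k"
  shows "U * M * madj U - 1\<^sub>m k = U * (M - 1\<^sub>m k) * madj U"
proof -
  have c: "U \<in> carrier_mat k k" using U by (rule unitary_carrier)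
  have "U * (M - 1\<^sub>m k) * madj U = (U * M - U) * madj U"
    using c M by (simp add: mult_minus_distrib_mat[of U k k M k])
  also have "\<dots> = U * M * madj U - U * madj U"
    using c M by (simp add: minus_mult_distrib_mat[of "U * M" k k U "madj U" k])
  finally show ?thesis using U by (simp add: unitary_r)
qed

lemma opnorm_conj: assumes U: "unitary_mat k U" and M: "M \<in> carrier_mat k k"
  shows "opnorm (U * M * madj U - 1\<^sub>m k) \<le> opnorm (M - 1\<^sub>m k)"
proof -
  have c: "U \<in> carrier_mat k k" "madj U \<in> carrier_mat k k" "M - 1\<^sub>m k \<in> carrier_mat k k"
    using U M by (auto simp: unitary_carrier)
  have "opnorm (U * (M - 1\<^sub>m k) * madj U) \<le> opnorm (U * (M - 1\<^sub>m k)) * opnorm (madj U)"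
    by (rule opnorm_mult) (use c in auto)
  also have "\<dots> \<le> opnorm U * opnorm (M - 1\<^sub>m k) * opnorm (madj U)"
    by (intro mult_right_mono opnorm_mult[OF c(1) c(3)]) auto
  also have "\<dots> \<le> 1 * opnorm (M - 1\<^sub>m k) * 1"
    using unitary_opnorm_k[OF U] unitary_opnorm_k[OF unitary_madj[OF U]]
    by (intro mult_mono) auto
  finally show ?thesis using conj_minus_one[OF U M] by simp
qed

lemma tau_conj: assumes U: "unitary_mat k U" and M: "M \<in> carrier_mat k k"
  and small: "opnorm (M - 1\<^sub>m k) < 1"
  shows "mtrace (mlog (U * M * madj U)) = mtrace (mlog M)"
proof -
  have c: "U \<in> carrier_mat k k" using U by (rule unitary_carrier)
  have UM: "U * M * madj U \<in> carrier_mat k k" by (intro mult_k madj_k c M)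
  have small2: "opnorm (U * M * madj U - 1\<^sub>m k) < 1" using opnorm_conj[OF U M] small by simp
  have sim: "similar_mat_wit (U * M * madj U - 1\<^sub>m k) (M - 1\<^sub>m k) U (madj U)"
    unfolding similar_mat_wit_def Let_def using c M U conj_minus_one[OF U M]
    by (auto simp: unitary_r unitary_l)
  have "mtrace ((U * M * madj U - 1\<^sub>m k) ^\<^sub>m Suc n) = mtrace ((M - 1\<^sub>m k) ^\<^sub>m Suc n)" for n
    by (rule mtrace_similar[OF similar_mat_wit_pow[OF sim]])
  then have "(\<lambda>n. lc n * mtrace ((M - 1\<^sub>m k) ^\<^sub>m Suc n)) sums mtrace (mlog (U * M * madj U))"
    using mlog_series[OF UM small2] by simp
  from sums_unique2[OF this mlog_series[OF M small]] show ?thesis .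
qed

lemma opnorm_rep_defect: assumes V: "unitary_mat k V" and P: "P \<in> carrier_mat k k"
  shows "opnorm (P * madj V - 1\<^sub>m k) \<le> opnorm (V - P)"
proof -
  have c: "V \<in> carrier_mat k k" "madj V \<in> carrier_mat k k" using V by (auto simp: unitary_carrier)
  have eq: "P * madj V - 1\<^sub>m k = - ((V - P) * madj V)"
  proof -
    have "- ((V - P) * madj V) = P * madj V - V * madj V"
      using c P by (intro eq_matI) (auto simp: scalar_prod_def sum_subtractf left_diff_distrib)
    then show ?thesis using V by (simp add: unitary_r)
  qed
  have "opnorm (P * madj V - 1\<^sub>m k) \<le> opnorm ((V - P) * madj V)" unfolding eq by (rule opnorm_uminus)
  also have "\<dots> \<le> opnorm (V - P) * opnorm (madj V)"
    by (rule opnorm_mult) (use c P in auto)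
  also have "\<dots> \<le> opnorm (V - P) * 1"
    using unitary_opnorm_k[OF unitary_madj[OF V]] by (intro mult_left_mono) auto
  finally show ?thesis by simp
qed

lemma opnorm_madj_minus_one: assumes U: "unitary_mat k U"
  shows "opnorm (madj U - 1\<^sub>m k) \<le> opnorm (U - 1\<^sub>m k)"
proof -
  have "madj U - 1\<^sub>m k = 1\<^sub>m k * madj U - 1\<^sub>m k"
    using one_left_k[OF madj_k[OF unitary_carrier[OF U]]] by simp
  then have "opnorm (madj U - 1\<^sub>m k) \<le> opnorm (U - 1\<^sub>m k)"
    using opnorm_rep_defect[OF U one_carrier_mat] by simp
  moreover have "opnorm (U - 1\<^sub>m k) = opnorm (U - 1\<^sub>m k)" ..
  ultimately show ?thesis by simp
qed

end


section \<open>Nearness to the identity\<close>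

definition near :: "nat \<Rightarrow> real \<Rightarrow> complex mat \<Rightarrow> nat \<Rightarrow> bool" where
  "near k \<delta> P a \<longleftrightarrow> P \<in> carrier_mat k k \<and> opnorm (P - 1\<^sub>m k) \<le> (1 + \<delta>) ^ a - 1"

lemma near_carrier: "near k \<delta> P a \<Longrightarrow> P \<in> carrier_mat k k"
  unfolding near_def by simp

lemma near_mult: assumes d: "0 \<le> \<delta>" and P: "near k \<delta> P a" and Q: "near k \<delta> Q b"
  shows "near k \<delta> (P * Q) (a + b)"
proof -
  have c: "P \<in> carrier_mat k k" "Q \<in> carrier_mat k k" using P Q by (auto simp: near_def)
  let ?x = "(1 + \<delta>) ^ a" and ?y = "(1 + \<delta>) ^ b"
  have e: "opnorm (P - 1\<^sub>m k) \<le> ?x - 1" "opnorm (Q - 1\<^sub>m k) \<le> ?y - 1" using P Q by (auto simp: near_def)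
  have "opnorm (P * Q - 1\<^sub>m k) \<le> opnorm (P - 1\<^sub>m k) + opnorm (Q - 1\<^sub>m k) + opnorm (P - 1\<^sub>m k) * opnorm (Q - 1\<^sub>m k)"
    by (rule opnorm_prod_minus_one[OF c])
  also have "\<dots> \<le> (?x - 1) + (?y - 1) + (?x - 1) * (?y - 1)"
    using e opnorm_nonneg[of "P - 1\<^sub>m k"] opnorm_nonneg[of "Q - 1\<^sub>m k"]
    by (intro add_mono mult_mono) linarith+
  also have "\<dots> = ?x * ?y - 1" by (simp add: algebra_simps)
  also have "\<dots> = (1 + \<delta>) ^ (a + b) - 1" by (simp add: power_add)
  finally show ?thesis unfolding near_def using c by simp
qed

lemma near_mono: assumes d: "0 \<le> \<delta>" and P: "near k \<delta> P a" and ab: "a \<le> b"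
  shows "near k \<delta> P b"
proof -
  have "(1 + \<delta>) ^ a \<le> (1 + \<delta>) ^ b" using d ab by (intro power_increasing) auto
  then show ?thesis using P unfolding near_def by simp
qed

lemma near_one: "near k \<delta> (1\<^sub>m k) 0"
proof -
  have z: "1\<^sub>m k - 1\<^sub>m k = (0\<^sub>m k k :: complex mat)" by (intro eq_matI) auto
  show ?thesis unfolding near_def z using opnorm_zero[of k k] by simp
qed

lemma near_conj: assumes U: "unitary_mat k U" and P: "near k \<delta> P a"
  shows "near k \<delta> (U * P * madj U) a"
  using opnorm_conj[OF U near_carrier[OF P]] P unitary_carrier[OF U] unfolding near_def
  by (auto intro!: mult_k madj_k)

lemma near_madj: assumes U: "unitary_mat k U" and P: "near k \<delta> U a"
  shows "near k \<delta> (madj U) a"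
  using opnorm_madj_minus_one[OF U] P unitary_carrier[OF U] unfolding near_def by auto

lemma near_small: assumes P: "near k \<delta> P a" and b: "(1 + \<delta>) ^ a \<le> 4/3"
  shows "opnorm (P - 1\<^sub>m k) \<le> 1/3"
  using P b unfolding near_def by simp

lemma tau_add_near: assumes P: "near k \<delta> P a" and Q: "near k \<delta> Q b"
  and ba: "(1 + \<delta>) ^ a \<le> 4/3" and bb: "(1 + \<delta>) ^ b \<le> 4/3"
  shows "mtrace (mlog (P * Q)) = mtrace (mlog P) + mtrace (mlog Q)"
  by (rule tau_add[OF near_carrier[OF P] near_carrier[OF Q] near_small[OF P ba] near_small[OF Q bb]])

lemma tau_conj_near: assumes U: "unitary_mat k U" and P: "near k \<delta> P a" and ba: "(1 + \<delta>) ^ a \<le> 4/3"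
  shows "mtrace (mlog (U * P * madj U)) = mtrace (mlog P)"
  by (rule tau_conj[OF U near_carrier[OF P]]) (use near_small[OF P ba] in simp)

lemma pow_bound_aux: assumes "0 \<le> d" shows "(1 + d) ^ N * (1 - real N * d) \<le> 1"
proof (induction N)
  case 0 then show ?case by simp
next
  case (Suc N)
  have "(1 + d) * (1 - real (Suc N) * d) \<le> 1 - real N * d"
    using assms by (simp add: algebra_simps)
  then have "(1 + d) ^ Suc N * (1 - real (Suc N) * d) \<le> (1 + d) ^ N * (1 - real N * d)"
    using assms by (simp add: mult.assoc mult_left_mono)
  then show ?case using Suc by simp
qed

lemma pow_bound: assumes "0 \<le> d" "real N * d \<le> 1/4" shows "(1 + d) ^ N \<le> 4/3"
proof -
  have "(1 + d) ^ N * (3/4) \<le> (1 + d) ^ N * (1 - real N * d)"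
    using assms by (intro mult_left_mono) auto
  also have "\<dots> \<le> 1" by (rule pow_bound_aux[OF assms(1)])
  finally show ?thesis by simp
qed


section \<open>Sums over chains\<close>

lemma delta_sum: assumes "finite T" "p \<in> T"
  shows "(\<Sum>q\<in>T. of_int (ind (p = q)) * f q) = (f p :: complex)"
proof -
  have "(\<Sum>q\<in>T. of_int (ind (p = q)) * f q) = (\<Sum>q\<in>T. if p = q then f q else 0)"
    by (intro sum.cong) (auto simp: ind_def)
  also have "\<dots> = f p" using assms by simp
  finally show ?thesis .
qed

lemma delta_sum_val: assumes "finite T" "p \<in> T"
  shows "(\<Sum>q\<in>T. of_int (if p = q then v else 0) * f q) = of_int v * (f p :: complex)"
proof -
  have "(\<Sum>q\<in>T. of_int (if p = q then v else 0) * f q) = (\<Sum>q\<in>T. if p = q then of_int v * f q else 0)"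
    by (intro sum.cong) auto
  also have "\<dots> = of_int v * f p" using assms by simp
  finally show ?thesis .
qed

lemma formal_sum_eval: assumes T: "finite T" "\<And>j. j < m \<Longrightarrow> (x j, y j) \<in> T"
  shows "(\<Sum>q\<in>T. of_int (formal_sum2 m c x y q) * f q) = (\<Sum>j<m. of_int (c j) * (f (x j, y j) :: complex))"
proof -
  have "(\<Sum>q\<in>T. of_int (formal_sum2 m c x y q) * f q)
      = (\<Sum>q\<in>T. \<Sum>j<m. of_int (if (x j, y j) = q then c j else 0) * f q)"
    unfolding formal_sum2_def by (simp add: sum_distrib_right)
  also have "\<dots> = (\<Sum>j<m. \<Sum>q\<in>T. of_int (if (x j, y j) = q then c j else 0) * f q)"
    by (rule sum.swap)
  also have "\<dots> = (\<Sum>j<m. of_int (c j) * f (x j, y j))"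
    by (intro sum.cong refl delta_sum_val T) auto
  finally show ?thesis .
qed

lemma hopf_eval:
  fixes f :: "'g \<times> 'g \<Rightarrow> complex"
  assumes T: "finite T"
    and P1: "\<And>l. l < 4 * g \<Longrightarrow> (prefix_prod G a b l, letter G a b l) \<in> T"
    and P2: "\<And>i. i < g \<Longrightarrow> (a i, inv\<^bsub>G\<^esub> (a i)) \<in> T"
    and P3: "\<And>i. i < g \<Longrightarrow> (b i, inv\<^bsub>G\<^esub> (b i)) \<in> T"
    and P4: "(\<one>\<^bsub>G\<^esub>, \<one>\<^bsub>G\<^esub>) \<in> T"
    and f1: "f (\<one>\<^bsub>G\<^esub>, \<one>\<^bsub>G\<^esub>) = 0"
  shows "(\<Sum>q\<in>T. of_int (hopf_cycle G g a b q) * f q) =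
    (\<Sum>l<4 * g. f (prefix_prod G a b l, letter G a b l))
    - (\<Sum>i<g. f (a i, inv\<^bsub>G\<^esub> (a i)) + f (b i, inv\<^bsub>G\<^esub> (b i)))"
proof -
  define A where "A q = (\<Sum>l<4*g. ind ((prefix_prod G a b l, letter G a b l) = q))" for q
  define B where "B q = (\<Sum>i<g. ind ((a i, inv\<^bsub>G\<^esub> (a i)) = q) + ind ((b i, inv\<^bsub>G\<^esub> (b i)) = q))" for q
  define C where "C q = (if (\<one>\<^bsub>G\<^esub>, \<one>\<^bsub>G\<^esub>) = q then 2 * int g else 0)" for q
  have h: "hopf_cycle G g a b q = A q - B q - C q" for q
    unfolding hopf_cycle_def A_def B_def C_def by auto
  have sA: "(\<Sum>q\<in>T. of_int (A q) * f q) = (\<Sum>l<4 * g. f (prefix_prod G a b l, letter G a b l))"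
  proof -
    have "(\<Sum>q\<in>T. of_int (A q) * f q)
        = (\<Sum>q\<in>T. \<Sum>l<4*g. of_int (ind ((prefix_prod G a b l, letter G a b l) = q)) * f q)"
      unfolding A_def by (simp add: sum_distrib_right)
    also have "\<dots> = (\<Sum>l<4*g. \<Sum>q\<in>T. of_int (ind ((prefix_prod G a b l, letter G a b l) = q)) * f q)"
      by (rule sum.swap)
    also have "\<dots> = (\<Sum>l<4 * g. f (prefix_prod G a b l, letter G a b l))"
      by (intro sum.cong refl delta_sum T P1) auto
    finally show ?thesis .
  qed
  have sB: "(\<Sum>q\<in>T. of_int (B q) * f q) = (\<Sum>i<g. f (a i, inv\<^bsub>G\<^esub> (a i)) + f (b i, inv\<^bsub>G\<^esub> (b i)))"
  proof -
    have "(\<Sum>q\<in>T. of_int (B q) * f q)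
        = (\<Sum>q\<in>T. \<Sum>i<g. of_int (ind ((a i, inv\<^bsub>G\<^esub> (a i)) = q)) * f q
            + of_int (ind ((b i, inv\<^bsub>G\<^esub> (b i)) = q)) * f q)"
      unfolding B_def by (simp add: sum_distrib_right distrib_right)
    also have "\<dots> = (\<Sum>i<g. \<Sum>q\<in>T. of_int (ind ((a i, inv\<^bsub>G\<^esub> (a i)) = q)) * f q
            + of_int (ind ((b i, inv\<^bsub>G\<^esub> (b i)) = q)) * f q)"
      by (rule sum.swap)
    also have "\<dots> = (\<Sum>i<g. f (a i, inv\<^bsub>G\<^esub> (a i)) + f (b i, inv\<^bsub>G\<^esub> (b i)))"
      by (intro sum.cong refl) (simp add: sum.distrib delta_sum T P2 P3)
    finally show ?thesis .
  qed
  have sC: "(\<Sum>q\<in>T. of_int (C q) * f q) = 0"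
    unfolding C_def using delta_sum_val[OF T P4, of "2 * int g" f] f1 by simp
  have "(\<Sum>q\<in>T. of_int (hopf_cycle G g a b q) * f q)
      = (\<Sum>q\<in>T. of_int (A q) * f q) - (\<Sum>q\<in>T. of_int (B q) * f q) - (\<Sum>q\<in>T. of_int (C q) * f q)"
    unfolding h by (simp add: sum_subtractf left_diff_distrib)
  then show ?thesis using sA sB sC by simp
qed

lemma bd3_eval:
  fixes f :: "'g \<times> 'g \<Rightarrow> complex"
  assumes T: "finite T" and H: "finite {t. h t \<noteq> 0}"
    and P: "\<And>u v w. h (u,v,w) \<noteq> 0 \<Longrightarrow>
      (v,w) \<in> T \<and> (u \<otimes>\<^bsub>G\<^esub> v, w) \<in> T \<and> (u, v \<otimes>\<^bsub>G\<^esub> w) \<in> T \<and> (u,v) \<in> T"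
  shows "(\<Sum>q\<in>T. of_int (bd3 G h q) * f q) =
    (\<Sum>t\<in>{t. h t \<noteq> 0}. of_int (h t) * (case t of (u,v,w) \<Rightarrow>
        f (v,w) - f (u \<otimes>\<^bsub>G\<^esub> v, w) + f (u, v \<otimes>\<^bsub>G\<^esub> w) - f (u,v)))"
proof -
  let ?H = "{t. h t \<noteq> 0}"
  define e where "e t q = (case t of (u,v,w) \<Rightarrow>
         ind ((v,w) = q) - ind ((u \<otimes>\<^bsub>G\<^esub> v, w) = q) + ind ((u, v \<otimes>\<^bsub>G\<^esub> w) = q) - ind ((u,v) = q))" for t q
  have "(\<Sum>q\<in>T. of_int (bd3 G h q) * f q) = (\<Sum>q\<in>T. \<Sum>t\<in>?H. of_int (h t) * (of_int (e t q) * f q))"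
    unfolding bd3_def e_def by (simp add: sum_distrib_right mult.assoc)
  also have "\<dots> = (\<Sum>t\<in>?H. of_int (h t) * (\<Sum>q\<in>T. of_int (e t q) * f q))"
    by (subst sum.swap) (simp add: sum_distrib_left)
  also have "\<dots> = (\<Sum>t\<in>?H. of_int (h t) * (case t of (u,v,w) \<Rightarrow>
        f (v,w) - f (u \<otimes>\<^bsub>G\<^esub> v, w) + f (u, v \<otimes>\<^bsub>G\<^esub> w) - f (u,v)))"
  proof (intro sum.cong refl)
    fix t assume t: "t \<in> ?H"
    obtain u v w where uvw: "t = (u,v,w)" by (metis prod_cases3)
    have p: "(v,w) \<in> T" "(u \<otimes>\<^bsub>G\<^esub> v, w) \<in> T" "(u, v \<otimes>\<^bsub>G\<^esub> w) \<in> T" "(u,v) \<in> T"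
      using P[of u v w] t uvw by auto
    have "(\<Sum>q\<in>T. of_int (e t q) * f q) =
        (\<Sum>q\<in>T. of_int (ind ((v,w) = q)) * f q) - (\<Sum>q\<in>T. of_int (ind ((u \<otimes>\<^bsub>G\<^esub> v, w) = q)) * f q)
        + (\<Sum>q\<in>T. of_int (ind ((u, v \<otimes>\<^bsub>G\<^esub> w) = q)) * f q) - (\<Sum>q\<in>T. of_int (ind ((u,v) = q)) * f q)"
      unfolding e_def uvw by (simp add: sum_subtractf sum.distrib algebra_simps)
    also have "\<dots> = f (v,w) - f (u \<otimes>\<^bsub>G\<^esub> v, w) + f (u, v \<otimes>\<^bsub>G\<^esub> w) - f (u,v)"
      by (simp only: delta_sum[OF T p(1)] delta_sum[OF T p(2)] delta_sum[OF T p(3)] delta_sum[OF T p(4)])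
    finally show "of_int (h t) * (\<Sum>q\<in>T. of_int (e t q) * f q) = of_int (h t) * (case t of (u,v,w) \<Rightarrow>
        f (v,w) - f (u \<otimes>\<^bsub>G\<^esub> v, w) + f (u, v \<otimes>\<^bsub>G\<^esub> w) - f (u,v))"
      using uvw by simp
  qed
  finally show ?thesis .
qed

fun mprod :: "nat \<Rightarrow> (nat \<Rightarrow> complex mat) \<Rightarrow> nat \<Rightarrow> complex mat" where
  "mprod k R 0 = 1\<^sub>m k"
| "mprod k R (Suc L) = mprod k R L * R L"

context group
begin

lemma letter_simps:
  "letter G a b (4 * i) = a i"
  "letter G a b (Suc (4 * i)) = b i"
  "letter G a b (Suc (Suc (4 * i))) = inv (a i)"
  "letter G a b (Suc (Suc (Suc (4 * i)))) = inv (b i)"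
proof -
  have "Suc (4 * i) div 4 = i" "Suc (4 * i) mod 4 = 1"
    "Suc (Suc (4 * i)) div 4 = i" "Suc (Suc (4 * i)) mod 4 = 2"
    "Suc (Suc (Suc (4 * i))) div 4 = i" "Suc (Suc (Suc (4 * i))) mod 4 = 3" by presburger+
  then show "letter G a b (4 * i) = a i"
    "letter G a b (Suc (4 * i)) = b i"
    "letter G a b (Suc (Suc (4 * i))) = inv (a i)"
    "letter G a b (Suc (Suc (Suc (4 * i)))) = inv (b i)"
    unfolding letter_def Let_def by simp_all
qed

lemma letter_carrier: assumes ab: "\<forall>i<g. a i \<in> carrier G \<and> b i \<in> carrier G"
  and l: "l < 4 * g" shows "letter G a b l \<in> carrier G"
proof -
  have "l div 4 < g" using l by auto
  then show ?thesis using ab unfolding letter_def Let_def by auto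
qed

lemma prefix_carrier: assumes ab: "\<forall>i<g. a i \<in> carrier G \<and> b i \<in> carrier G"
  shows "l \<le> 4 * g \<Longrightarrow> prefix_prod G a b l \<in> carrier G"
proof (induction l)
  case 0 then show ?case by simp
next
  case (Suc l) then show ?case using letter_carrier[OF ab, of l] by simp
qed

lemma prefix_4: assumes ab: "\<forall>i<g. a i \<in> carrier G \<and> b i \<in> carrier G"
  shows "i \<le> g \<Longrightarrow> prefix_prod G a b (4 * i) = gcomm_prod G a b i"
proof (induction i)
  case 0 then show ?case by simp
next
  case (Suc i)
  have c: "a i \<in> carrier G" "b i \<in> carrier G" using ab Suc(2) by auto
  have pc: "prefix_prod G a b (4 * i) \<in> carrier G" using prefix_carrier[OF ab, of "4 * i"] Suc by simp
  have "prefix_prod G a b (4 * Suc i) = prefix_prod G a b (Suc (Suc (Suc (Suc (4 * i)))))"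
    by (simp add: numeral_eq_Suc)
  also have "\<dots> = gcomm_prod G a b i \<otimes> (a i \<otimes> b i \<otimes> inv (a i) \<otimes> inv (b i))"
    using Suc c pc by (simp add: letter_simps m_assoc)
  finally show ?case by (simp add: gcomm_def)
qed

end

locale qrep = group G for G :: "'g monoid" (structure) +
  fixes k :: nat and \<rho> :: "'g \<Rightarrow> complex mat" and S :: "'g set" and \<delta> :: real
  assumes unit: "\<And>x. x \<in> carrier G \<Longrightarrow> unitary_mat k (\<rho> x)"
    and rho_one: "\<rho> \<one> = 1\<^sub>m k"
    and Ssub: "S \<subseteq> carrier G"
    and dpos: "0 \<le> \<delta>"
    and defect: "\<And>s t. s \<in> S \<Longrightarrow> t \<in> S \<Longrightarrow> opnorm (\<rho> (s \<otimes> t) - \<rho> s * \<rho> t) < \<delta>"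
    and dsmall: "(1 + \<delta>) ^ 2 \<le> 4/3"
begin

lemma rho_unit[simp]: "x \<in> carrier G \<Longrightarrow> unitary_mat k (\<rho> x)"
  by (rule unit)

lemma rho_carrier[simp]: "x \<in> carrier G \<Longrightarrow> \<rho> x \<in> carrier_mat k k"
  using unit unitary_carrier by blast

definition Dm :: "'g \<Rightarrow> 'g \<Rightarrow> complex mat" where
  "Dm x y = \<rho> x * \<rho> y * madj (\<rho> (x \<otimes> y))"

definition om :: "'g \<Rightarrow> 'g \<Rightarrow> complex" where
  "om x y = mtrace (mlog (Dm x y))"

lemma Dm_carrier[simp]: "x \<in> carrier G \<Longrightarrow> y \<in> carrier G \<Longrightarrow> Dm x y \<in> carrier_mat k k"
  unfolding Dm_def by (intro mult_k madj_k rho_carrier m_closed) auto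

lemma Dm_unitary: "x \<in> carrier G \<Longrightarrow> y \<in> carrier G \<Longrightarrow> unitary_mat k (Dm x y)"
  unfolding Dm_def by (intro unitary_mult unitary_madj rho_unit m_closed) auto

lemma Dm_near: assumes x: "x \<in> S" and y: "y \<in> S" shows "near k \<delta> (Dm x y) 1"
proof -
  have xy: "x \<in> carrier G" "y \<in> carrier G" using x y Ssub by auto
  have "opnorm (Dm x y - 1\<^sub>m k) \<le> opnorm (\<rho> (x \<otimes> y) - \<rho> x * \<rho> y)"
    unfolding Dm_def by (rule opnorm_rep_defect) (use xy in \<open>auto intro!: mult_k\<close>)
  also have "\<dots> \<le> (1 + \<delta>) ^ 1 - 1" using defect[OF x y] by simp
  finally show ?thesis unfolding near_def using xy by simp
qed

lemma d1: "(1 + \<delta>) ^ 1 \<le> 4/3"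
proof -
  have "(1 + \<delta>) ^ 1 \<le> (1 + \<delta>) ^ 2" using dpos by (intro power_increasing) auto
  then show ?thesis using dsmall by simp
qed

lemmas ms = assoc_k[where k=k] mult_k[where k=k] madj_k[where k=k] madj_mult_k[where k=k]
  one_left_k[where k=k] one_right_k[where k=k] unitary_carrier[where k=k]
  unitary_l[where k=k] unitary_r[where k=k] unitary_l2[where k=k] unitary_r2[where k=k]
  one_carrier_mat m_assoc rho_one

lemma cocycle: assumes S: "a \<in> S" "b \<in> S" "c \<in> S" "a \<otimes> b \<in> S" "b \<otimes> c \<in> S"
  shows "om a b + om (a \<otimes> b) c = om b c + om a (b \<otimes> c)"
proof -
  have G: "a \<in> carrier G" "b \<in> carrier G" "c \<in> carrier G" using S Ssub by auto
  have eq: "Dm a b * Dm (a \<otimes> b) c = (\<rho> a * Dm b c * madj (\<rho> a)) * Dm a (b \<otimes> c)"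
    unfolding Dm_def using G by (simp add: ms)
  have "om a b + om (a \<otimes> b) c = mtrace (mlog (Dm a b * Dm (a \<otimes> b) c))"
    unfolding om_def by (rule tau_add_near[OF Dm_near Dm_near d1 d1, symmetric]) (use S in auto)
  also have "\<dots> = mtrace (mlog (\<rho> a * Dm b c * madj (\<rho> a))) + om a (b \<otimes> c)"
    unfolding eq om_def
    by (rule tau_add_near[OF near_conj[OF rho_unit Dm_near] Dm_near d1 d1]) (use S G in auto)
  also have "mtrace (mlog (\<rho> a * Dm b c * madj (\<rho> a))) = om b c"
    unfolding om_def by (rule tau_conj_near[OF rho_unit Dm_near d1]) (use S G in auto)
  finally show ?thesis .
qed


lemma mprod_carrier: "(\<And>l. l < L \<Longrightarrow> R l \<in> carrier_mat k k) \<Longrightarrow> mprod k R L \<in> carrier_mat k k"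
  by (induction L) auto

lemma mprod_unitary: "(\<And>l. l < L \<Longrightarrow> unitary_mat k (R l)) \<Longrightarrow> unitary_mat k (mprod k R L)"
  by (induction L) (auto intro: unitary_mult unitary_one)

lemma tele:
  assumes ab: "\<forall>i<g. a i \<in> carrier G \<and> b i \<in> carrier G"
    and SP: "\<forall>l<4 * g. prefix_prod G a b l \<in> S \<and> letter G a b l \<in> S"
    and bd: "(1 + \<delta>) ^ (4 * g) \<le> 4/3"
  shows "L \<le> 4 * g \<Longrightarrow>
    near k \<delta> (mprod k (\<lambda>l. \<rho> (letter G a b l)) L * madj (\<rho> (prefix_prod G a b L))) L \<and>
    mtrace (mlog (mprod k (\<lambda>l. \<rho> (letter G a b l)) L * madj (\<rho> (prefix_prod G a b L))))
      = (\<Sum>l<L. om (prefix_prod G a b l) (letter G a b l))"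
proof (induction L)
  case 0
  have "mprod k (\<lambda>l. \<rho> (letter G a b l)) 0 * madj (\<rho> (prefix_prod G a b 0)) = 1\<^sub>m k"
    by (simp add: rho_one)
  then show ?case using near_one[of k \<delta>] mlog_one[of k] by simp
next
  case (Suc L)
  let ?R = "\<lambda>l. \<rho> (letter G a b l)"
  let ?p = "prefix_prod G a b L" and ?w = "letter G a b L"
  have L: "L < 4 * g" using Suc by simp
  have pw: "?p \<in> carrier G" "?w \<in> carrier G"
    using prefix_carrier[OF ab, of L] letter_carrier[OF ab L] L by auto
  have mc: "mprod k ?R L \<in> carrier_mat k k"
    by (rule mprod_carrier) (use letter_carrier[OF ab] L in auto)
  define X where "X = mprod k ?R L * madj (\<rho> ?p)"
  have IH: "near k \<delta> X L" "mtrace (mlog X) = (\<Sum>l<L. om (prefix_prod G a b l) (letter G a b l))"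
    using Suc X_def by auto
  have eq: "mprod k ?R (Suc L) * madj (\<rho> (prefix_prod G a b (Suc L))) = X * Dm ?p ?w"
    unfolding X_def Dm_def using pw mc by (simp add: ms)
  have DN: "near k \<delta> (Dm ?p ?w) 1" using Dm_near SP L by auto
  have "(1 + \<delta>) ^ L \<le> (1 + \<delta>) ^ (4 * g)"
    using L dpos by (intro power_increasing) auto
  then have bL: "(1 + \<delta>) ^ L \<le> 4/3" using bd by linarith
  show ?case unfolding eq
  proof
    show "near k \<delta> (X * Dm ?p ?w) (Suc L)" using near_mult[OF dpos IH(1) DN] by simp
    show "mtrace (mlog (X * Dm ?p ?w)) = (\<Sum>l<Suc L. om (prefix_prod G a b l) (letter G a b l))"
      using tau_add_near[OF IH(1) DN bL d1] IH(2) by (simp add: om_def)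
  qed
qed


lemma bound_mono: assumes "n \<le> N" "(1 + \<delta>) ^ N \<le> 4/3" shows "(1 + \<delta>) ^ n \<le> 4/3"
proof -
  have "(1 + \<delta>) ^ n \<le> (1 + \<delta>) ^ N" using assms dpos by (intro power_increasing) auto
  then show ?thesis using assms by linarith
qed

lemma phase2:
  assumes ab: "\<forall>i<g. a i \<in> carrier G \<and> b i \<in> carrier G"
    and SA: "\<forall>i<g. a i \<in> S \<and> b i \<in> S \<and> inv (a i) \<in> S \<and> inv (b i) \<in> S"
    and bd: "(1 + \<delta>) ^ (6 * g) \<le> 4/3"
  shows "i \<le> g \<Longrightarrow>
    near k \<delta> (madj (mcomm_prod k \<rho> a b i) * mprod k (\<lambda>l. \<rho> (letter G a b l)) (4 * i)) (2 * i) \<and>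
    unitary_mat k (madj (mcomm_prod k \<rho> a b i) * mprod k (\<lambda>l. \<rho> (letter G a b l)) (4 * i)) \<and>
    unitary_mat k (mcomm_prod k \<rho> a b i) \<and>
    mtrace (mlog (madj (mcomm_prod k \<rho> a b i) * mprod k (\<lambda>l. \<rho> (letter G a b l)) (4 * i)))
      = (\<Sum>j<i. om (a j) (inv (a j)) + om (b j) (inv (b j)))"
proof (induction i)
  case 0
  have "madj (mcomm_prod k \<rho> a b 0) * mprod k (\<lambda>l. \<rho> (letter G a b l)) (4 * 0) = 1\<^sub>m k" by simp
  then show ?case using near_one[of k \<delta>] mlog_one[of k] unitary_one[of k] by simp
next
  case (Suc i)
  let ?R = "\<lambda>l. \<rho> (letter G a b l)"
  have i: "i < g" using Suc by simp
  have G: "a i \<in> carrier G" "b i \<in> carrier G" using ab i by auto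
  have SS: "a i \<in> S" "b i \<in> S" "inv (a i) \<in> S" "inv (b i) \<in> S" using SA i by auto
  define Z where "Z = mcomm_prod k \<rho> a b i"
  define Y where "Y = mprod k ?R (4 * i)"
  define F where "F = madj Z * Y"
  have IH: "near k \<delta> F (2 * i)" "unitary_mat k F" "unitary_mat k Z"
    "mtrace (mlog F) = (\<Sum>j<i. om (a j) (inv (a j)) + om (b j) (inv (b j)))"
    using Suc(1) i unfolding F_def Y_def Z_def by auto
  have Yu: "unitary_mat k Y" unfolding Y_def
    by (rule mprod_unitary) (use letter_carrier[OF ab] i in auto)
  have Zc: "Z \<in> carrier_mat k k" "Y \<in> carrier_mat k k"
    using IH(3) Yu by (auto simp: unitary_carrier)
  define A where "A = \<rho> (a i)"
  define B where "B = \<rho> (b i)"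
  have AB: "unitary_mat k A" "unitary_mat k B" using G by (auto simp: A_def B_def)
  define K where "K = mcomm A B"
  define C where "C = A * B * madj A"
  define Ea where "Ea = Dm (a i) (inv (a i))"
  define Eb where "Eb = Dm (b i) (inv (b i))"
  have Ku: "unitary_mat k K" unfolding K_def mcomm_def using AB
    by (intro unitary_mult unitary_madj) auto
  have Cu: "unitary_mat k C" unfolding C_def using AB
    by (intro unitary_mult unitary_madj) auto
  have Ea': "Ea = A * \<rho> (inv (a i))" unfolding Ea_def Dm_def A_def using G by (simp add: ms)
  have Eb': "Eb = B * \<rho> (inv (b i))" unfolding Eb_def Dm_def B_def using G by (simp add: ms)
  have E: "near k \<delta> Ea 1" "near k \<delta> Eb 1" unfolding Ea_def Eb_def
    by (rule Dm_near[OF SS(1) SS(3)], rule Dm_near[OF SS(2) SS(4)])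
  have Zs: "mcomm_prod k \<rho> a b (Suc i) = Z * K" unfolding Z_def K_def A_def B_def by simp
  have Ys: "mprod k ?R (4 * Suc i) = Y * A * B * \<rho> (inv (a i)) * \<rho> (inv (b i))"
  proof -
    have "4 * Suc i = Suc (Suc (Suc (Suc (4 * i))))" by simp
    then show ?thesis unfolding Y_def A_def B_def by (simp only: mprod.simps letter_simps)
  qed
  define M1 where "M1 = C * Ea * madj C"
  define M2 where "M2 = F * M1"
  define M3 where "M3 = madj K * M2 * madj (madj K)"
  have eq: "madj (mcomm_prod k \<rho> a b (Suc i)) * mprod k ?R (4 * Suc i) = M3 * Eb"
    unfolding Zs Ys M3_def M2_def M1_def F_def Ea' Eb' C_def K_def mcomm_def
    using AB Zc G by (simp add: ms)
  have n1: "near k \<delta> M1 1" unfolding M1_def by (rule near_conj[OF Cu E(1)])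
  have t1: "mtrace (mlog M1) = om (a i) (inv (a i))"
    unfolding M1_def om_def Ea_def[symmetric] by (rule tau_conj_near[OF Cu E(1) d1])
  have b2i: "(1 + \<delta>) ^ (2 * i) \<le> 4/3" by (rule bound_mono[OF _ bd]) (use i in simp)
  have b2i1: "(1 + \<delta>) ^ (2 * i + 1) \<le> 4/3" by (rule bound_mono[OF _ bd]) (use i in simp)
  have n2: "near k \<delta> M2 (2 * i + 1)" unfolding M2_def by (rule near_mult[OF dpos IH(1) n1])
  have t2: "mtrace (mlog M2) = mtrace (mlog F) + om (a i) (inv (a i))"
    unfolding M2_def using tau_add_near[OF IH(1) n1 b2i d1] t1 by simp
  have n3: "near k \<delta> M3 (2 * i + 1)" unfolding M3_def by (rule near_conj[OF unitary_madj[OF Ku] n2])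
  have t3: "mtrace (mlog M3) = mtrace (mlog M2)"
    unfolding M3_def by (rule tau_conj_near[OF unitary_madj[OF Ku] n2 b2i1])
  have n4: "near k \<delta> (M3 * Eb) (2 * Suc i)" using near_mult[OF dpos n3 E(2)] by simp
  have t4: "mtrace (mlog (M3 * Eb)) = mtrace (mlog M3) + om (b i) (inv (b i))"
    using tau_add_near[OF n3 E(2) b2i1 d1] by (simp add: Eb_def om_def)
  have u: "unitary_mat k (madj (mcomm_prod k \<rho> a b (Suc i)) * mprod k ?R (4 * Suc i))"
    unfolding Zs Ys using IH(3) Ku Yu AB G
    by (intro unitary_mult unitary_madj rho_unit inv_closed) auto
  have uZ: "unitary_mat k (mcomm_prod k \<rho> a b (Suc i))" unfolding Zs using IH(3) Ku by (rule unitary_mult)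
  show ?case unfolding eq using n4 u uZ t4 t3 t2 IH(4) unfolding eq[symmetric] by simp
qed


lemma main_matrix:
  assumes ab: "\<forall>i<g. a i \<in> carrier G \<and> b i \<in> carrier G"
    and SA: "\<forall>i<g. a i \<in> S \<and> b i \<in> S \<and> inv (a i) \<in> S \<and> inv (b i) \<in> S"
    and SP: "\<forall>l<4 * g. prefix_prod G a b l \<in> S \<and> letter G a b l \<in> S"
    and bd: "(1 + \<delta>) ^ (6 * g) \<le> 4/3"
    and rel: "gcomm_prod G a b g = \<one>"
  shows "mtrace (mlog (mcomm_prod k \<rho> a b g)) =
    (\<Sum>l<4 * g. om (prefix_prod G a b l) (letter G a b l))
    - (\<Sum>j<g. om (a j) (inv (a j)) + om (b j) (inv (b j)))"
proof -
  let ?R = "\<lambda>l. \<rho> (letter G a b l)"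
  define Y where "Y = mprod k ?R (4 * g)"
  define Z where "Z = mcomm_prod k \<rho> a b g"
  define F where "F = madj Z * Y"
  have bd4: "(1 + \<delta>) ^ (4 * g) \<le> 4/3" by (rule bound_mono[OF _ bd]) simp
  have bd2: "(1 + \<delta>) ^ (2 * g) \<le> 4/3" by (rule bound_mono[OF _ bd]) simp
  have pg: "prefix_prod G a b (4 * g) = \<one>" using prefix_4[OF ab, of g] rel by simp
  have Yu: "unitary_mat k Y" unfolding Y_def
    by (rule mprod_unitary) (use letter_carrier[OF ab] in auto)
  have Yc: "Y \<in> carrier_mat k k" using Yu by (rule unitary_carrier)
  have T: "near k \<delta> Y (4 * g)" "mtrace (mlog Y) = (\<Sum>l<4 * g. om (prefix_prod G a b l) (letter G a b l))"
  proof -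
    have "mprod k ?R (4 * g) * madj (\<rho> (prefix_prod G a b (4 * g))) = Y"
      unfolding pg rho_one Y_def[symmetric] using Yc by simp
    then show "near k \<delta> Y (4 * g)" "mtrace (mlog Y) = (\<Sum>l<4 * g. om (prefix_prod G a b l) (letter G a b l))"
      using tele[OF ab SP bd4, of "4 * g"] by auto
  qed
  have P: "near k \<delta> F (2 * g)" "unitary_mat k F" "unitary_mat k Z"
    "mtrace (mlog F) = (\<Sum>j<g. om (a j) (inv (a j)) + om (b j) (inv (b j)))"
    using phase2[OF ab SA bd, of g] unfolding F_def Z_def Y_def by auto
  have Zc: "Z \<in> carrier_mat k k" using P(3) by (rule unitary_carrier)
  have Z_eq: "Z = Y * madj F" unfolding F_def using Yu P(3) Yc Zc by (simp add: ms)
  have Y_eq: "Y = Z * F" unfolding F_def using Yu P(3) Yc Zc by (simp add: ms)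
  have nZ: "near k \<delta> Z (4 * g + 2 * g)"
    unfolding Z_eq by (rule near_mult[OF dpos T(1) near_madj[OF P(2) P(1)]])
  have "mtrace (mlog Y) = mtrace (mlog Z) + mtrace (mlog F)"
    unfolding Y_eq by (rule tau_add_near[OF nZ P(1) _ bd2]) (use bd in simp)
  then show ?thesis using T(2) P(4) unfolding Z_def by simp
qed


lemma om_one: "om \<one> \<one> = 0"
  unfolding om_def Dm_def by (simp add: rho_one mlog_one)

lemma chain_main:
  assumes ab: "\<forall>i<g. a i \<in> carrier G \<and> b i \<in> carrier G"
    and SA: "\<forall>i<g. a i \<in> S \<and> b i \<in> S \<and> inv (a i) \<in> S \<and> inv (b i) \<in> S"
    and SP: "\<forall>l<4 * g. prefix_prod G a b l \<in> S \<and> letter G a b l \<in> S"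
    and bd: "(1 + \<delta>) ^ (6 * g) \<le> 4/3"
    and rel: "gcomm_prod G a b g = \<one>"
    and cyc: "\<And>q. formal_sum2 m c x y q - hopf_cycle G g a b q = bd3 G h q"
    and hfin: "finite {t. h t \<noteq> 0}"
    and SH: "\<And>u v w. h (u,v,w) \<noteq> 0 \<Longrightarrow> u \<in> S \<and> v \<in> S \<and> w \<in> S \<and> u \<otimes> v \<in> S \<and> v \<otimes> w \<in> S"
  shows "mtrace (mlog (mcomm_prod k \<rho> a b g)) = (\<Sum>j<m. of_int (c j) * om (x j) (y j))"
proof -
  define f where "f q = om (fst q) (snd q)" for q
  let ?H = "{t. h t \<noteq> 0}"
  define pts where "pts t = (case t of (u,v,w) \<Rightarrow> {(v,w), (u \<otimes> v, w), (u, v \<otimes> w), (u,v)})" for t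
  define T where "T = (\<lambda>j. (x j, y j)) ` {..<m} \<union> (\<lambda>l. (prefix_prod G a b l, letter G a b l)) ` {..<4*g}
    \<union> (\<lambda>i. (a i, inv (a i))) ` {..<g} \<union> (\<lambda>i. (b i, inv (b i))) ` {..<g} \<union> {(\<one>, \<one>)}
    \<union> (\<Union>t\<in>?H. pts t)"
  have finpts: "finite (pts t)" for t unfolding pts_def by (cases t) auto
  have T: "finite T" unfolding T_def using hfin finpts by auto
  have z: "(\<Sum>q\<in>T. of_int (formal_sum2 m c x y q) * f q) = (\<Sum>j<m. of_int (c j) * om (x j) (y j))"
    using formal_sum_eval[OF T, of m x y c f] unfolding f_def T_def by auto
  have hp: "(\<Sum>q\<in>T. of_int (hopf_cycle G g a b q) * f q) =
    (\<Sum>l<4 * g. om (prefix_prod G a b l) (letter G a b l))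
    - (\<Sum>i<g. om (a i) (inv (a i)) + om (b i) (inv (b i)))"
    using hopf_eval[OF T, of g G a b f] om_one unfolding f_def T_def by auto
  have b3: "(\<Sum>q\<in>T. of_int (bd3 G h q) * f q) = 0"
  proof -
    have P: "(v,w) \<in> T \<and> (u \<otimes> v, w) \<in> T \<and> (u, v \<otimes> w) \<in> T \<and> (u,v) \<in> T" if "h (u,v,w) \<noteq> 0" for u v w
    proof -
      have "pts (u,v,w) \<subseteq> T" unfolding T_def using that by blast
      then show ?thesis unfolding pts_def by auto
    qed
    have "(\<Sum>q\<in>T. of_int (bd3 G h q) * f q) =
      (\<Sum>t\<in>?H. of_int (h t) * (case t of (u,v,w) \<Rightarrow>
        f (v,w) - f (u \<otimes> v, w) + f (u, v \<otimes> w) - f (u,v)))"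
      by (rule bd3_eval[OF T hfin P])
    also have "\<dots> = (\<Sum>t\<in>?H. 0)"
    proof (intro sum.cong refl)
      fix t assume t: "t \<in> ?H"
      obtain u v w where uvw: "t = (u,v,w)" by (metis prod_cases3)
      have "om u v + om (u \<otimes> v) w = om v w + om u (v \<otimes> w)"
        using cocycle SH[of u v w] t uvw by auto
      then show "of_int (h t) * (case t of (u,v,w) \<Rightarrow>
        f (v,w) - f (u \<otimes> v, w) + f (u, v \<otimes> w) - f (u,v)) = 0"
        unfolding uvw f_def by (simp add: algebra_simps)
    qed
    finally show ?thesis by simp
  qed
  have "(\<Sum>q\<in>T. of_int (formal_sum2 m c x y q) * f q)
      = (\<Sum>q\<in>T. of_int (hopf_cycle G g a b q) * f q) + (\<Sum>q\<in>T. of_int (bd3 G h q) * f q)"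
  proof -
    have "formal_sum2 m c x y q = hopf_cycle G g a b q + bd3 G h q" for q using cyc[of q] by simp
    then show ?thesis by (simp add: sum.distrib distrib_right)
  qed
  then show ?thesis using z hp b3 main_matrix[OF ab SA SP bd rel] by simp
qed

end


theorem proposition3p3:
  fixes G :: "'g monoid" and g m :: nat and a b :: "nat \<Rightarrow> 'g"
    and c :: "nat \<Rightarrow> int" and x y :: "nat \<Rightarrow> 'g"
  assumes "group G" and "countable (carrier G)"
    and "\<And>i. i < g \<Longrightarrow> a i \<in> carrier G" and "\<And>i. i < g \<Longrightarrow> b i \<in> carrier G"
    and "gcomm_prod G a b g = \<one>\<^bsub>G\<^esub>"
    and "\<And>j. j < m \<Longrightarrow> x j \<in> carrier G" and "\<And>j. j < m \<Longrightarrow> y j \<in> carrier G"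
    and "is_2cycle G (formal_sum2 m c x y)"
    and "homologous2 G (formal_sum2 m c x y) (hopf_cycle G g a b)"
  shows "\<exists>S \<delta>. finite S \<and> S \<subseteq> carrier G \<and> \<delta> > 0 \<and>
     (\<forall>k \<rho>. Sdelta_rep G S \<delta> k \<rho> \<longrightarrow>
        (1 / (2 * pi * \<i>)) * mtrace (mlog (mcomm_prod k \<rho> a b g)) =
        (1 / (2 * pi * \<i>)) * (\<Sum>j<m. of_int (c j) *
           mtrace (mlog (\<rho> (x j) * \<rho> (y j) * madj (\<rho> (x j \<otimes>\<^bsub>G\<^esub> y j))))))"
proof -
  interpret group G by fact
  have ab: "\<forall>i<g. a i \<in> carrier G \<and> b i \<in> carrier G" using assms(3,4) by auto
  obtain h where hfc: "fin_chain (carrier G \<times> carrier G \<times> carrier G) h"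
    and cyc: "\<And>q. formal_sum2 m c x y q - hopf_cycle G g a b q = bd3 G h q"
    using assms(9) unfolding homologous2_def by blast
  let ?H = "{t. h t \<noteq> 0}"
  have hfin: "finite ?H" and Hsub: "?H \<subseteq> carrier G \<times> carrier G \<times> carrier G"
    using hfc unfolding fin_chain_def by auto
  define trip where "trip t = (case t of (u,v,w) \<Rightarrow> {u, v, w, u \<otimes>\<^bsub>G\<^esub> v, v \<otimes>\<^bsub>G\<^esub> w})" for t
  define S where "S = a ` {..<g} \<union> b ` {..<g} \<union> (\<lambda>i. inv\<^bsub>G\<^esub> (a i)) ` {..<g} \<union> (\<lambda>i. inv\<^bsub>G\<^esub> (b i)) ` {..<g}
    \<union> (\<lambda>l. prefix_prod G a b l) ` {..<4*g} \<union> (\<lambda>l. letter G a b l) ` {..<4*g} \<union> (\<Union>t\<in>?H. trip t)"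
  define \<delta> :: real where "\<delta> = 1 / (24 * real g + 8)"
  have fintrip: "finite (trip t)" for t unfolding trip_def by (cases t) auto
  have Sfin: "finite S" unfolding S_def using hfin fintrip by auto
  have Ssub: "S \<subseteq> carrier G"
  proof -
    have "trip t \<subseteq> carrier G" if "t \<in> ?H" for t
    proof -
      obtain u v w where uvw: "t = (u,v,w)" by (metis prod_cases3)
      then have "u \<in> carrier G" "v \<in> carrier G" "w \<in> carrier G" using Hsub that by auto
      then show ?thesis unfolding trip_def uvw by auto
    qed
    moreover have "prefix_prod G a b l \<in> carrier G" if "l < 4 * g" for l
      using that prefix_carrier[OF ab, of l] by simp
    moreover have "letter G a b l \<in> carrier G" if "l < 4 * g" for l
      using that letter_carrier[OF ab, of l] by simp
    ultimately show ?thesis unfolding S_def using ab by auto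
  qed
  have dpos: "0 < \<delta>" unfolding \<delta>_def by simp
  have bd6: "(1 + \<delta>) ^ (6 * g) \<le> 4/3"
    by (rule pow_bound) (use dpos in \<open>auto simp: \<delta>_def field_simps\<close>)
  have bd2: "(1 + \<delta>) ^ 2 \<le> 4/3"
    by (rule pow_bound) (use dpos in \<open>auto simp: \<delta>_def field_simps\<close>)
  have SA: "\<forall>i<g. a i \<in> S \<and> b i \<in> S \<and> inv\<^bsub>G\<^esub> (a i) \<in> S \<and> inv\<^bsub>G\<^esub> (b i) \<in> S" unfolding S_def by auto
  have SP: "\<forall>l<4 * g. prefix_prod G a b l \<in> S \<and> letter G a b l \<in> S" unfolding S_def by auto
  have SH: "u \<in> S \<and> v \<in> S \<and> w \<in> S \<and> u \<otimes>\<^bsub>G\<^esub> v \<in> S \<and> v \<otimes>\<^bsub>G\<^esub> w \<in> S" if "h (u,v,w) \<noteq> 0" for u v w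
  proof -
    have "trip (u,v,w) \<subseteq> S" unfolding S_def using that by blast
    then show ?thesis unfolding trip_def by auto
  qed
  show ?thesis
  proof (intro exI conjI allI impI)
    show "finite S" "S \<subseteq> carrier G" "0 < \<delta>" by (fact Sfin, fact Ssub, fact dpos)
    fix k \<rho> assume rep: "Sdelta_rep G S \<delta> k \<rho>"
    interpret Q: qrep G k \<rho> S \<delta>
      using rep Ssub dpos bd2 unfolding Sdelta_rep_def by unfold_locales auto
    have "mtrace (mlog (mcomm_prod k \<rho> a b g)) = (\<Sum>j<m. of_int (c j) * Q.om (x j) (y j))"
      by (rule Q.chain_main[OF ab SA SP bd6 assms(5) cyc hfin SH])
    then show "(1 / (2 * pi * \<i>)) * mtrace (mlog (mcomm_prod k \<rho> a b g)) =
        (1 / (2 * pi * \<i>)) * (\<Sum>j<m. of_int (c j) *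
           mtrace (mlog (\<rho> (x j) * \<rho> (y j) * madj (\<rho> (x j \<otimes>\<^bsub>G\<^esub> y j)))))"
      unfolding Q.om_def Q.Dm_def by simp
  qed
qed

end
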